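(* Let $n\ge3$. Then $Inn_l(Q_n)$ $(=Inn_r(Q_n))$ is an elementary abelian $2$-group of order $2^{2^{n-1}-1}$.
   Context: Cayley--Dickson loops: $Q_0=\{1,-1\}\subset\mathbb{R}$ with conjugation $x^*=x$. For $n\ge1$, $Q_n=\{(x,0),(x,1)\mid x\in Q_{n-1}\}$ with multiplication $(x,0)(y,0)=(xy,0)$, $(x,0)(y,1)=(yx,1)$, $(x,1)(y,0)=(xy^*,1)$, $(x,1)(y,1)=(-y^*x,0)$ and conjugation $(x,0)^*=(x^*,0)$, $(x,1)^*=(-x,1)$, where $-(x,a)=(-x,a)$. $Q_n$ is a loop with neutral element $1=(1,0,\dots,0)$. For a loop $Q$: $L_x(a)=xa$, $Mlt_l(Q)=\langle L_x\mid x\in Q\rangle$ and $Inn_l(Q)=\{f\in Mlt_l(Q)\mid f(1)=1\}$; analogously $Inn_r(Q)$ with right translations $R_x(a)=ax$. *)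

theory Defs
  imports "HOL-Algebra.Bij" "HOL-Algebra.Generated_Groups"
begin

text \<open>Cayley--Dickson elements: CR r is a real number of Q_0 (r = 1 or -1),
  CP x a is the pair (x,a) with a = False meaning 0 and a = True meaning 1.\<close>
datatype cd = CR int | CP cd bool

fun cd_neg :: "cd \<Rightarrow> cd" where
  "cd_neg (CR r) = CR (- r)"
| "cd_neg (CP x a) = CP (cd_neg x) a"

fun cd_conj :: "cd \<Rightarrow> cd" where
  "cd_conj (CR r) = CR r"
| "cd_conj (CP x False) = CP (cd_conj x) False"
| "cd_conj (CP x True) = CP (cd_neg x) True"

lemma size_cd_neg[simp]: "size (cd_neg x) = size x"
  by (induction x) auto

lemma size_cd_conj[simp]: "size (cd_conj x) = size x"
  by (induction x rule: cd_conj.induct) auto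

function cd_mult :: "cd \<Rightarrow> cd \<Rightarrow> cd" where
  "cd_mult (CR r) (CR s) = CR (r * s)"
| "cd_mult (CP x False) (CP y False) = CP (cd_mult x y) False"
| "cd_mult (CP x False) (CP y True) = CP (cd_mult y x) True"
| "cd_mult (CP x True) (CP y False) = CP (cd_mult x (cd_conj y)) True"
| "cd_mult (CP x True) (CP y True) = CP (cd_neg (cd_mult (cd_conj y) x)) False"
| "cd_mult (CR r) (CP y b) = CR 0"
| "cd_mult (CP x a) (CR s) = CR 0"
  by pat_completeness auto
termination
  by (relation "measure (\<lambda>(x, y). size x + size y)") auto

fun Q :: "nat \<Rightarrow> cd set" where
  "Q 0 = {CR 1, CR (-1)}"
| "Q (Suc n) = {CP x a | x a. x \<in> Q n}"

fun cd_one :: "nat \<Rightarrow> cd" where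
  "cd_one 0 = CR 1"
| "cd_one (Suc n) = CP (cd_one n) False"

definition Ltr :: "nat \<Rightarrow> cd \<Rightarrow> (cd \<Rightarrow> cd)" where
  "Ltr n x = (\<lambda>a \<in> Q n. cd_mult x a)"

definition Rtr :: "nat \<Rightarrow> cd \<Rightarrow> (cd \<Rightarrow> cd)" where
  "Rtr n x = (\<lambda>a \<in> Q n. cd_mult a x)"

definition Mlt_l :: "nat \<Rightarrow> (cd \<Rightarrow> cd) set" where
  "Mlt_l n = generate (BijGroup (Q n)) (Ltr n ` Q n)"

definition Mlt_r :: "nat \<Rightarrow> (cd \<Rightarrow> cd) set" where
  "Mlt_r n = generate (BijGroup (Q n)) (Rtr n ` Q n)"

definition Inn_l :: "nat \<Rightarrow> (cd \<Rightarrow> cd) set" where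
  "Inn_l n = {f \<in> Mlt_l n. f (cd_one n) = cd_one n}"

definition Inn_r :: "nat \<Rightarrow> (cd \<Rightarrow> cd) set" where
  "Inn_r n = {f \<in> Mlt_r n. f (cd_one n) = cd_one n}"

definition elementary_abelian_2_subgroup :: "'a set \<Rightarrow> ('a, 'b) monoid_scheme \<Rightarrow> bool" where
  "elementary_abelian_2_subgroup H G \<longleftrightarrow>
     subgroup H G \<and>
     (\<forall>f\<in>H. \<forall>g\<in>H. f \<otimes>\<^bsub>G\<^esub> g = g \<otimes>\<^bsub>G\<^esub> f) \<and>
     (\<forall>f\<in>H. f \<otimes>\<^bsub>G\<^esub> f = \<one>\<^bsub>G\<^esub>)"

end

theory Submission
  imports Defs
begin

fun xr :: "bool list \<Rightarrow> bool list \<Rightarrow> bool list" where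
  "xr (a#l) (b#m) = (a \<noteq> b) # xr l m"
| "xr _ _ = []"

fun bas :: "bool list \<Rightarrow> cd" where
  "bas [] = CR 1"
| "bas (a#l) = CP (bas l) a"

definition smul :: "int \<Rightarrow> cd \<Rightarrow> cd" where
  "smul s x = (if s = 1 then x else cd_neg x)"

fun sg :: "cd \<Rightarrow> int" where
  "sg (CR r) = r"
| "sg (CP x a) = sg x"

fun sh :: "cd \<Rightarrow> bool list" where
  "sh (CR r) = []"
| "sh (CP x a) = a # sh x"

definition cc :: "bool list \<Rightarrow> int" where
  "cc j = (if True \<in> set j then -1 else 1)"

function sig :: "bool list \<Rightarrow> bool list \<Rightarrow> int" where
  "sig (False#i) (False#j) = sig i j"
| "sig (False#i) (True#j) = sig j i"
| "sig (True#i) (False#j) = sig i j * cc j"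
| "sig (True#i) (True#j) = - cc j * sig j i"
| "sig [] _ = 1"
| "sig (a#i) [] = 1"
  by pat_completeness auto
termination
  by (relation "measure (\<lambda>(i, j). length i + length j)") auto

abbreviation pm :: "int \<Rightarrow> bool" where "pm s \<equiv> s = 1 \<or> s = -1"

lemma cc_pm: "pm (cc j)" by (simp add: cc_def)
lemma cc_sq[simp]: "cc j * cc j = 1" by (simp add: cc_def)
lemma cc_cons[simp]: "cc (False # j) = cc j" "cc (True # j) = -1" "cc [] = 1"
  by (auto simp: cc_def)

lemma sig_pm: "pm (sig i j)"
  by (induction i j rule: sig.induct) (auto simp: cc_def)

lemma sig_sq[simp]: "sig i j * sig i j = 1"
  using sig_pm[of i j] by auto

lemma pm_sq: "pm s \<Longrightarrow> s * s = 1" by auto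

lemma neg_neg[simp]: "cd_neg (cd_neg x) = x"
  by (induction x) auto

lemma smul_mult: "pm s \<Longrightarrow> pm t \<Longrightarrow> smul s (smul t x) = smul (s * t) x"
  by (auto simp: smul_def)

lemma smul_comm: "smul s (smul t x) = smul t (smul s x)"
  by (auto simp: smul_def)

lemma smul_one[simp]: "smul 1 x = x" by (simp add: smul_def)

lemma sg_neg[simp]: "sg (cd_neg x) = - sg x" by (induction x) auto
lemma sh_neg[simp]: "sh (cd_neg x) = sh x" by (induction x) auto
lemma sg_smul[simp]: "pm s \<Longrightarrow> sg (smul s x) = s * sg x" by (auto simp: smul_def)
lemma sh_smul[simp]: "sh (smul s x) = sh x" by (auto simp: smul_def)
lemma sg_bas[simp]: "sg (bas l) = 1" by (induction l) auto
lemma sh_bas[simp]: "sh (bas l) = l" by (induction l) auto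
lemma CP_smul: "CP (smul s x) a = smul s (CP x a)" by (auto simp: smul_def)

lemma Q_char: "Q n = {smul s (bas l) | s l. pm s \<and> length l = n}"
proof (induction n)
  case 0
  show ?case by (auto simp: smul_def)
next
  case (Suc n)
  show ?case
  proof -
  have A: "z \<in> {smul s (bas l) | s l. pm s \<and> length l = Suc n}" if "z \<in> Q (Suc n)" for z
  proof -
    from that obtain x a where "z = CP x a" "x \<in> Q n" by auto
    with Suc obtain s l where "x = smul s (bas l)" "pm s" "length l = n" by auto
    then show ?thesis
      using \<open>z = CP x a\<close> by (auto simp: CP_smul intro!: exI[of _ s] exI[of _ "a#l"])
  qed
  have B: "z \<in> Q (Suc n)" if "z \<in> {smul s (bas l) | s l. pm s \<and> length l = Suc n}" for z
  proof -
    from that obtain s l where "z = smul s (bas l)" "pm s" "length l = Suc n" by auto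
    then obtain a l' where "l = a # l'" "length l' = n" by (cases l) auto
    then have "z = CP (smul s (bas l')) a" using \<open>z = _\<close> by (simp add: CP_smul)
    moreover have "smul s (bas l') \<in> Q n" using Suc \<open>pm s\<close> \<open>length l' = n\<close> by auto
    ultimately show ?thesis by auto
  qed
  from A B show ?thesis by blast
  qed
qed

lemma Q_elem: "x \<in> Q n \<Longrightarrow> x = smul (sg x) (bas (sh x)) \<and> pm (sg x) \<and> length (sh x) = n"
  unfolding Q_char by auto

lemma Q_intro: "pm s \<Longrightarrow> length l = n \<Longrightarrow> smul s (bas l) \<in> Q n"
  unfolding Q_char by auto

lemma conj_neg[simp]: "cd_conj (cd_neg x) = cd_neg (cd_conj x)"
  by (induction x rule: cd_conj.induct) auto

lemma mult_neg_both: "cd_mult (cd_neg x) y = cd_neg (cd_mult x y) \<and> cd_mult x (cd_neg y) = cd_neg (cd_mult x y)"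
  by (induction x y rule: cd_mult.induct) auto

lemma mult_neg_l[simp]: "cd_mult (cd_neg x) y = cd_neg (cd_mult x y)"
  using mult_neg_both by blast


lemma mult_neg_r[simp]: "cd_mult x (cd_neg y) = cd_neg (cd_mult x y)"
  using mult_neg_both by blast

lemma pm_mult: "pm a \<Longrightarrow> pm b \<Longrightarrow> pm (a * b)" by auto

lemma mult_smul_l: "cd_mult (smul s x) y = smul s (cd_mult x y)"
  by (auto simp: smul_def)
lemma mult_smul_r: "cd_mult x (smul s y) = smul s (cd_mult x y)"
  by (auto simp: smul_def)
lemma conj_smul: "cd_conj (smul s x) = smul s (cd_conj x)"
  by (auto simp: smul_def)
lemma neg_smul: "pm s \<Longrightarrow> cd_neg (smul s x) = smul (-s) x"
  by (auto simp: smul_def)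

lemma conj_bas: "cd_conj (bas l) = smul (cc l) (bas l)"
proof (induction l)
  case Nil then show ?case by simp
next
  case (Cons a l)
  show ?case
  proof (cases a)
    case True then show ?thesis by (simp add: smul_def)
  next
    case False then show ?thesis using Cons by (simp add: CP_smul cc_def)
  qed
qed

lemma xr_comm: "xr i j = xr j i"
  by (induction i j rule: xr.induct) auto

lemma length_xr[simp]: "length (xr i j) = min (length i) (length j)"
  by (induction i j rule: xr.induct) auto

lemma mult_bas: "length i = length j \<Longrightarrow> cd_mult (bas i) (bas j) = smul (sig i j) (bas (xr i j))"
proof (induction i j rule: sig.induct)
  case (1 i j) then show ?case by (simp add: CP_smul)
next
  case (2 i j) then show ?case by (simp add: CP_smul xr_comm)
next
  case (3 i j) then show ?case
    by (simp add: CP_smul conj_bas mult_smul_r smul_mult cc_pm sig_pm mult.commute)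
next
  case (4 i j)
  have p: "pm (cc j * sig j i)" using cc_pm sig_pm pm_mult by blast
  from 4 show ?case
    by (simp add: CP_smul conj_bas mult_smul_l smul_mult cc_pm sig_pm neg_smul[OF p] xr_comm)
qed auto

lemma mult_Q: "x \<in> Q n \<Longrightarrow> y \<in> Q n \<Longrightarrow>
   cd_mult x y = smul (sg x * sg y * sig (sh x) (sh y)) (bas (xr (sh x) (sh y)))"
proof -
  assume x: "x \<in> Q n" and y: "y \<in> Q n"
  note X = Q_elem[OF x] and Y = Q_elem[OF y]
  have "cd_mult x y = cd_mult (smul (sg x) (bas (sh x))) (smul (sg y) (bas (sh y)))"
    using X Y by metis
  also have "\<dots> = smul (sg x) (smul (sg y) (smul (sig (sh x) (sh y)) (bas (xr (sh x) (sh y)))))"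
    unfolding mult_smul_l mult_smul_r using mult_bas[of "sh x" "sh y"] X Y by (simp add: smul_comm)
  also have "\<dots> = smul (sg x * sg y * sig (sh x) (sh y)) (bas (xr (sh x) (sh y)))"
    using X Y by (simp add: smul_mult sig_pm pm_mult mult.assoc)
  finally show ?thesis .
qed

abbreviation zs :: "nat \<Rightarrow> bool list" where "zs m \<equiv> replicate m False"

lemma cc_zero: "cc j = 1 \<longleftrightarrow> j = zs (length j)"
  by (induction j) (auto simp: cc_def)

lemma cc_zs[simp]: "cc (zs m) = 1" by (simp add: cc_def)

lemma sig_sq2[simp]: "sig i j * (sig i j * y) = y"
  by (metis mult.assoc mult_1 sig_sq)
lemma cc_sq2[simp]: "cc i * (cc i * y) = y"
  by (metis mult.assoc mult_1 cc_sq)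

lemma xr_self[simp]: "xr i i = zs (length i)"
  by (induction i) auto

lemma xr_assoc: "length a = length b \<Longrightarrow> length b = length c \<Longrightarrow> xr (xr a b) c = xr a (xr b c)"
proof (induction a arbitrary: b c)
  case Nil then show ?case by simp
next
  case (Cons x a) then show ?case by (cases b; cases c) auto
qed

lemma xr_zs_l[simp]: "xr (zs (length i)) i = i"
  by (induction i) auto
lemma xr_zs_r[simp]: "xr i (zs (length i)) = i"
  by (induction i) auto

lemma xr_eq_zs: "length i = length j \<Longrightarrow> xr i j = zs (length i) \<longleftrightarrow> i = j"
proof (induction i arbitrary: j)
  case Nil then show ?case by simp
next
  case (Cons a i) then show ?case by (cases j) auto
qed

lemma xr_cancel: "length i = length j \<Longrightarrow> xr (xr i j) j = i"
  by (simp add: xr_assoc) (metis xr_zs_r)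
lemma xr_cancel2: "length i = length j \<Longrightarrow> xr j (xr j i) = i"
  by (metis xr_assoc xr_self xr_zs_l)

lemma sig_zs: "length i = m \<Longrightarrow> sig (zs m) i = 1 \<and> sig i (zs m) = 1"
proof (induction m arbitrary: i)
  case 0 then show ?case by simp
next
  case (Suc m)
  then obtain a i' where "i = a # i'" "length i' = m" by (cases i) auto
  with Suc show ?case by (cases a) auto
qed

lemma comm: "length u = length i \<Longrightarrow> sig u i * sig i u = cc u * cc i * cc (xr u i)"
proof (induction u arbitrary: i)
  case Nil then show ?case by simp
next
  case (Cons a u)
  then obtain b i' where i: "i = b # i'" "length i' = length u" by (cases i) auto
  have IH: "sig u i' * sig i' u = cc u * cc i' * cc (xr u i')" using Cons i by simp
  show ?case
  proof (cases a; cases b)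
    assume "a" "b"
    then show ?thesis using i IH
      by (simp add: algebra_simps)
  next
    assume "a" "\<not> b"
    then show ?thesis using i by (simp add: algebra_simps)
  next
    assume "\<not> a" "b"
    then show ?thesis using i by (simp add: algebra_simps)
  next
    assume "\<not> a" "\<not> b"
    then show ?thesis using i IH by simp
  qed
qed

lemma comm': "length u = length i \<Longrightarrow> sig u i = cc u * cc i * cc (xr u i) * sig i u"
proof -
  assume l: "length u = length i"
  have "sig u i = sig u i * sig i u * sig i u" by (simp add: mult.assoc)
  also have "\<dots> = cc u * cc i * cc (xr u i) * sig i u" using comm[OF l] by simp
  finally show ?thesis .
qed

lemma altAB: "length v = length i \<Longrightarrow>
   sig v i * sig v (xr i v) = cc v \<and> sig i v * sig (xr i v) v = cc v"
proof (induction v arbitrary: i)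
  case Nil then show ?case by simp
next
  case (Cons a v)
  then obtain b i' where i: "i = b # i'" "length i' = length v" by (cases i) auto
  have A: "sig v i' * sig v (xr i' v) = cc v" and B: "sig i' v * sig (xr i' v) v = cc v"
    using Cons i by auto
  have C1: "sig v i' = cc v * cc i' * cc (xr i' v) * sig i' v"
    using comm'[of v i'] i by (simp add: xr_comm)
  have C2: "sig i' v = cc v * cc i' * cc (xr i' v) * sig v i'"
    using comm'[of i' v] i by (simp add: xr_comm mult_ac)
  have H1: "sig v i' * sig (xr i' v) v = cc i' * cc (xr i' v)"
    unfolding C1 using B by (simp add: mult_ac)
  have H2: "sig i' v * sig v (xr i' v) = cc i' * cc (xr i' v)"
    unfolding C2 using A by (simp add: mult_ac)
  show ?case
  proof (cases a; cases b)
    assume "a" "b"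
    then show ?thesis using i A H2 by (simp add: mult_ac)
  next
    assume "a" "\<not> b"
    then show ?thesis using i A H1 by (simp add: mult_ac)
  next
    assume "\<not> a" "b"
    then show ?thesis using i B by (simp add: mult_ac)
  next
    assume "\<not> a" "\<not> b"
    then show ?thesis using i A B by simp
  qed
qed

definition L :: "nat \<Rightarrow> bool list set" where "L m = {l. length l = m}"

lemma L_alt: "L m = {xs. set xs \<subseteq> UNIV \<and> length xs = m}" by (simp add: L_def)
lemma finite_L[simp]: "finite (L m)"
  unfolding L_alt by (rule finite_lists_length_eq) simp
lemma card_L: "card (L m) = 2 ^ m"
  using card_lists_length_eq[of "UNIV::bool set" m] by (simp add: L_def card_UNIV_bool)

lemma L_Suc: "L (Suc m) = Cons False ` L m \<union> Cons True ` L m"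
proof -
  have "l \<in> Cons False ` L m \<union> Cons True ` L m" if "length l = Suc m" for l
    using that by (cases l) (auto simp: L_def)
  then show ?thesis by (auto simp: L_def)
qed

lemma prod_L_Suc: "(\<Prod>l\<in>L (Suc m). f l) = (\<Prod>i\<in>L m. f (False # i)) * (\<Prod>i\<in>L m. f (True # i))"
proof -
  have "(\<Prod>l\<in>L (Suc m). f l) = (\<Prod>l\<in>Cons False ` L m. f l) * (\<Prod>l\<in>Cons True ` L m. f l)"
    unfolding L_Suc by (rule prod.union_disjoint) auto
  also have "\<dots> = (\<Prod>i\<in>L m. f (False # i)) * (\<Prod>i\<in>L m. f (True # i))"
    by (simp add: prod.reindex)
  finally show ?thesis .
qed

lemma prod_L_const: "(\<Prod>i\<in>L m. c) = c ^ (2 ^ m)"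
  by (simp add: card_L)

lemma pm_pow_even: "pm c \<Longrightarrow> m \<ge> 1 \<Longrightarrow> c ^ (2 ^ m) = (1::int)"
proof -
  assume "pm c" "m \<ge> 1"
  then have "even ((2::nat) ^ m)" by simp
  with \<open>pm c\<close> show ?thesis by auto
qed

lemma prod_sq: "(\<Prod>i\<in>A. f i) * (\<Prod>i\<in>A. f i) = (\<Prod>i\<in>A. f i * f i)"
  by (simp add: prod.distrib)

lemma prod_L_reindex: "length a = m \<Longrightarrow> (\<Prod>k\<in>L m. f (xr a k)) = (\<Prod>k\<in>L m. f k)"
proof -
  assume a: "length a = m"
  have "bij_betw (xr a) (L m) (L m)"
    by (rule bij_betw_byWitness[where f'="xr a"]) (auto simp: L_def a xr_cancel2)
  then show ?thesis by (rule prod.reindex_bij_betw)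
qed

lemma prod_cc: "m \<ge> 1 \<Longrightarrow> (\<Prod>i\<in>L m. cc i) = -1"
proof (induction m rule: nat_induct_at_least)
  case base
  have "L 1 = {[False], [True]}" using L_Suc[of 0] by (auto simp: L_def)
  then show ?case by simp
next
  case (Suc m)
  have "(-1::int) ^ (2 ^ m) = 1" using Suc pm_pow_even[of "-1" m] by simp
  then show ?case using Suc by (simp add: prod_L_Suc prod_L_const card_L)
qed

lemma prod_sig_col: "length u = m \<Longrightarrow> m \<ge> 2 \<Longrightarrow> (\<Prod>i\<in>L m. sig i u) = 1"
proof -
  assume "length u = m" "m \<ge> 2"
  then obtain a u' m' where u: "u = a # u'" "m = Suc m'" "length u' = m'" "m' \<ge> 1"
    by (cases u) auto
  have sq: "\<And>f. (\<Prod>i\<in>L m'. (f i::int)) * (\<Prod>i\<in>L m'. f i) = (\<Prod>i\<in>L m'. f i * f i)"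
    by (rule prod_sq)
  show ?thesis
  proof (cases a)
    case True
    have "(\<Prod>i\<in>L m. sig i u) = (\<Prod>i\<in>L m'. sig u' i) * (\<Prod>i\<in>L m'. (- cc u') * sig u' i)"
      using u True by (simp add: prod_L_Suc)
    also have "\<dots> = (\<Prod>i\<in>L m'. sig u' i) * (\<Prod>i\<in>L m'. sig u' i) * (- cc u') ^ (2 ^ m')"
      by (simp only: prod.distrib prod_L_const mult_ac)
    also have "\<dots> = 1" using u cc_pm[of u'] by (simp add: sq pm_pow_even)
    finally show ?thesis .
  next
    case False
    have "(\<Prod>i\<in>L m. sig i u) = (\<Prod>i\<in>L m'. sig i u') * (\<Prod>i\<in>L m'. sig i u' * cc u')"
      using u False by (simp add: prod_L_Suc)
    also have "\<dots> = (\<Prod>i\<in>L m'. sig i u') * (\<Prod>i\<in>L m'. sig i u') * (cc u') ^ (2 ^ m')"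
      by (simp only: prod.distrib prod_L_const mult_ac)
    also have "\<dots> = 1" using u cc_pm[of u'] by (simp add: sq pm_pow_even)
    finally show ?thesis .
  qed
qed

lemma prod_sig_row_step: "length u' = m' \<Longrightarrow> m' \<ge> 1 \<Longrightarrow>
   (\<Prod>i\<in>L (Suc m'). sig (a # u') i) = (\<Prod>i\<in>L m'. sig u' i) * (\<Prod>i\<in>L m'. sig i u')"
proof (cases a)
  case True
  assume "length u' = m'" "m' \<ge> 1"
  have "(\<Prod>i\<in>L (Suc m'). sig (a # u') i) = (\<Prod>i\<in>L m'. sig u' i * cc i) * (\<Prod>i\<in>L m'. (- cc i) * sig i u')"
    using True by (simp add: prod_L_Suc)
  also have "\<dots> = (\<Prod>i\<in>L m'. sig u' i) * (\<Prod>i\<in>L m'. sig i u') * ((\<Prod>i\<in>L m'. cc i) * (\<Prod>i\<in>L m'. - cc i))"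
    unfolding prod.distrib by (simp only: mult_ac)
  also have "(\<Prod>i\<in>L m'. - cc i) = (\<Prod>i\<in>L m'. (-1) * cc i)" by simp
  also have "\<dots> = (-1) ^ (2 ^ m') * (\<Prod>i\<in>L m'. cc i)" by (simp only: prod.distrib prod_L_const)
  finally show ?thesis using \<open>m' \<ge> 1\<close> by (simp add: prod_cc pm_pow_even)
next
  case False
  then show ?thesis by (simp add: prod_L_Suc)
qed

lemma prod_sig_row: "m \<ge> 2 \<Longrightarrow> length u = m \<Longrightarrow> (\<Prod>i\<in>L m. sig u i) = 1"
proof (induction m arbitrary: u rule: nat_induct_at_least)
  case base
  then obtain a b where u: "u = [a, b]" by (cases u; cases "tl u") auto
  have L1: "L (Suc 0) = {[False], [True]}" using L_Suc[of 0] by (auto simp: L_def)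
  have "(\<Prod>i\<in>L 2. sig u i) = (\<Prod>i\<in>L 1. sig [b] i) * (\<Prod>i\<in>L 1. sig i [b])"
    using prod_sig_row_step[of "[b]" 1 a] u by (simp add: numeral_2_eq_2)
  then show ?case by (cases b) (simp_all add: L1)
next
  case (Suc m)
  then obtain a u' where u: "u = a # u'" "length u' = m" by (cases u) auto
  then show ?case using Suc prod_sig_row_step[of u' m a] prod_sig_col[of u' m] by simp
qed

definition st :: "nat \<Rightarrow> bool list \<Rightarrow> (bool list \<Rightarrow> int) \<Rightarrow> cd \<Rightarrow> cd" where
  "st n t e = (\<lambda>x\<in>Q n. smul (sg x * e (sh x)) (bas (xr t (sh x))))"

definition pme :: "(bool list \<Rightarrow> int) \<Rightarrow> bool" where "pme e \<longleftrightarrow> (\<forall>j. pm (e j))"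

lemma pmeD: "pme e \<Longrightarrow> pm (e j)" by (simp add: pme_def)
lemma pme_mult: "pme e1 \<Longrightarrow> pme e2 \<Longrightarrow> pme (\<lambda>j. e1 j * e2 (f j))"
  unfolding pme_def using pm_mult by blast

lemma st_apply: "x \<in> Q n \<Longrightarrow> st n t e x = smul (sg x * e (sh x)) (bas (xr t (sh x)))"
  by (simp add: st_def)

lemma pme_sq[simp]: "pme e \<Longrightarrow> e j * e j = 1" by (simp add: pmeD pm_sq)

lemma st_Q: "length t = n \<Longrightarrow> pme e \<Longrightarrow> x \<in> Q n \<Longrightarrow> st n t e x \<in> Q n"
proof -
  assume a: "length t = n" "pme e" "x \<in> Q n"
  note X = Q_elem[OF a(3)]
  have "pm (sg x * e (sh x))" using X a(2) pmeD pm_mult by blast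
  then show ?thesis using X a by (simp add: st_apply Q_intro)
qed

lemma st_cong: "(\<And>j. length j = n \<Longrightarrow> e j = e' j) \<Longrightarrow> st n t e = st n t e'"
  unfolding st_def
proof (intro restrict_ext)
  fix x assume h: "\<And>j. length j = n \<Longrightarrow> e j = e' j" and x: "x \<in> Q n"
  have "e (sh x) = e' (sh x)" using h Q_elem[OF x] by blast
  then show "smul (sg x * e (sh x)) (bas (xr t (sh x))) = smul (sg x * e' (sh x)) (bas (xr t (sh x)))"
    by simp
qed

lemma sg_st: "length t = n \<Longrightarrow> pme e \<Longrightarrow> x \<in> Q n \<Longrightarrow> sg (st n t e x) = sg x * e (sh x)"
proof -
  assume a: "length t = n" "pme e" "x \<in> Q n"
  have "pm (sg x * e (sh x))" using Q_elem[OF a(3)] a(2) pmeD pm_mult by blast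
  then show ?thesis using a(3) by (simp add: st_apply)
qed
lemma sh_st: "x \<in> Q n \<Longrightarrow> sh (st n t e x) = xr t (sh x)"
  by (simp add: st_apply)

lemma st_comp: assumes "length t1 = n" "length t2 = n" "pme e1" "pme e2"
  shows "compose (Q n) (st n t2 e2) (st n t1 e1) = st n (xr t2 t1) (\<lambda>j. e1 j * e2 (xr t1 j))"
proof (rule ext)
  fix x show "compose (Q n) (st n t2 e2) (st n t1 e1) x = st n (xr t2 t1) (\<lambda>j. e1 j * e2 (xr t1 j)) x"
  proof (cases "x \<in> Q n")
    case True
    note X = Q_elem[OF True]
    have y: "st n t1 e1 x \<in> Q n" by (rule st_Q[OF assms(1,3) True])
    have sy: "sg (st n t1 e1 x) = sg x * e1 (sh x)" using sg_st[OF assms(1,3) True] .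
    have hy: "sh (st n t1 e1 x) = xr t1 (sh x)" using sh_st[OF True] .
    have "compose (Q n) (st n t2 e2) (st n t1 e1) x = st n t2 e2 (st n t1 e1 x)"
      using True by (simp add: compose_def)
    also have "\<dots> = smul (sg x * e1 (sh x) * e2 (xr t1 (sh x))) (bas (xr t2 (xr t1 (sh x))))"
      unfolding st_apply[OF y] sy hy ..
    also have "xr t2 (xr t1 (sh x)) = xr (xr t2 t1) (sh x)"
      using X assms by (simp add: xr_assoc)
    also have "smul (sg x * e1 (sh x) * e2 (xr t1 (sh x))) (bas (xr (xr t2 t1) (sh x)))
        = st n (xr t2 t1) (\<lambda>j. e1 j * e2 (xr t1 j)) x"
      unfolding st_apply[OF True] by (simp add: mult.assoc)
    finally show ?thesis .
  next
    case False then show ?thesis unfolding compose_def st_def by simp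
  qed
qed

lemma st_id: "st n (zs n) (\<lambda>_. 1) = (\<lambda>x\<in>Q n. x)"
  unfolding st_def
proof (intro restrict_ext)
  fix x assume x: "x \<in> Q n"
  note X = Q_elem[OF x]
  then have "xr (zs n) (sh x) = sh x" by (metis xr_zs_l)
  then show "smul (sg x * 1) (bas (xr (zs n) (sh x))) = x" using X by simp
qed

lemma st_inv: assumes "length t = n" "pme e"
  shows "compose (Q n) (st n t e) (st n t (\<lambda>j. e (xr t j))) = (\<lambda>x\<in>Q n. x)"
    and "compose (Q n) (st n t (\<lambda>j. e (xr t j))) (st n t e) = (\<lambda>x\<in>Q n. x)"
proof -
  have pe: "pme (\<lambda>j. e (xr t j))" using assms by (simp add: pme_def)
  show "compose (Q n) (st n t e) (st n t (\<lambda>j. e (xr t j))) = (\<lambda>x\<in>Q n. x)"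
    unfolding st_comp[OF assms(1) assms(1) pe assms(2)] st_id[symmetric] using assms
    by simp
  show "compose (Q n) (st n t (\<lambda>j. e (xr t j))) (st n t e) = (\<lambda>x\<in>Q n. x)"
    unfolding st_comp[OF assms(1) assms(1) assms(2) pe] st_id[symmetric] using assms
    by simp (intro st_cong, simp add: xr_cancel2)
qed

lemma st_Bij: assumes "length t = n" "pme e" shows "st n t e \<in> Bij (Q n)"
proof -
  have pe: "pme (\<lambda>j. e (xr t j))" using assms by (simp add: pme_def)
  have "bij_betw (st n t e) (Q n) (Q n)"
  proof (rule bij_betw_byWitness[where f'="st n t (\<lambda>j. e (xr t j))"])
    show "\<forall>a\<in>Q n. st n t (\<lambda>j. e (xr t j)) (st n t e a) = a"
    proof
      fix a assume "a \<in> Q n"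
      then show "st n t (\<lambda>j. e (xr t j)) (st n t e a) = a"
        using fun_cong[OF st_inv(2)[OF assms], of a] by (simp add: compose_def)
    qed
    show "\<forall>a\<in>Q n. st n t e (st n t (\<lambda>j. e (xr t j)) a) = a"
    proof
      fix a assume "a \<in> Q n"
      then show "st n t e (st n t (\<lambda>j. e (xr t j)) a) = a"
        using fun_cong[OF st_inv(1)[OF assms], of a] by (simp add: compose_def)
    qed
    show "st n t e ` Q n \<subseteq> Q n" by (rule image_subsetI, rule st_Q[OF assms])
    show "st n t (\<lambda>j. e (xr t j)) ` Q n \<subseteq> Q n" by (rule image_subsetI, rule st_Q[OF assms(1) pe])
  qed
  moreover have "st n t e \<in> extensional (Q n)" unfolding st_def by (rule restrict_extensional)
  ultimately show ?thesis unfolding Bij_def by blast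
qed

lemma Ltr_st: "x \<in> Q n \<Longrightarrow> Ltr n x = st n (sh x) (\<lambda>j. sg x * sig (sh x) j)"
  unfolding Ltr_def st_def
proof (intro restrict_ext)
  fix a assume "x \<in> Q n" "a \<in> Q n"
  then show "cd_mult x a = smul (sg a * (sg x * sig (sh x) (sh a))) (bas (xr (sh x) (sh a)))"
    using mult_Q[of x n a] by (simp add: algebra_simps)
qed


declare Q.simps[simp del]

lemma xr_zs_r2[simp]: "length i = m \<Longrightarrow> xr i (zs m) = i" using xr_zs_r by blast
lemma xr_zs_l2[simp]: "length i = m \<Longrightarrow> xr (zs m) i = i" using xr_zs_l by blast

definition inv1 :: "nat \<Rightarrow> bool list \<Rightarrow> (bool list \<Rightarrow> int) \<Rightarrow> bool" where
  "inv1 m t e \<longleftrightarrow> (\<exists>c. pm c \<and> (\<forall>i. length i = m \<longrightarrow>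
      e (False#i) * e (True#i) = c * cc i * cc (xr i (tl t))))"

definition inv2 :: "nat \<Rightarrow> bool list \<Rightarrow> (bool list \<Rightarrow> int) \<Rightarrow> bool" where
  "inv2 m t e \<longleftrightarrow> (\<Prod>i\<in>L m. e (False#i)) = (if hd t then -1 else 1)"

definition M :: "nat \<Rightarrow> (cd \<Rightarrow> cd) set" where
  "M m = {st (Suc m) t e | t e. length t = Suc m \<and> pme e \<and> inv1 m t e \<and> inv2 m t e}"

lemma prodT: assumes "m \<ge> 1" "pme e" "inv1 m t e" "length t = Suc m"
  shows "(\<Prod>i\<in>L m. e (True#i)) = (\<Prod>i\<in>L m. e (False#i))"
proof -
  obtain c where c: "pm c" "\<And>i. length i = m \<Longrightarrow> e (False#i) * e (True#i) = c * cc i * cc (xr i (tl t))"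
    using assms(3) unfolding inv1_def by blast
  have lt: "length (tl t) = m" using assms(4) by simp
  have "\<And>i. i \<in> L m \<Longrightarrow> e (True#i) = e (False#i) * (c * cc i * cc (xr i (tl t)))"
  proof -
    fix i assume "i \<in> L m"
    then have "e (False#i) * (e (False#i) * e (True#i)) = e (False#i) * (c * cc i * cc (xr i (tl t)))"
      using c by (simp add: L_def)
    then show "e (True#i) = e (False#i) * (c * cc i * cc (xr i (tl t)))"
      using assms(2) by (simp add: mult.assoc[symmetric])
  qed
  then have "(\<Prod>i\<in>L m. e (True#i)) = (\<Prod>i\<in>L m. e (False#i) * (c * cc i * cc (xr i (tl t))))"
    by (rule prod.cong[OF refl])
  also have "\<dots> = (\<Prod>i\<in>L m. e (False#i)) * (c ^ 2 ^ m * (\<Prod>i\<in>L m. cc i) * (\<Prod>i\<in>L m. cc (xr i (tl t))))"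
    by (simp only: prod.distrib prod_L_const)
  also have "(\<Prod>i\<in>L m. cc (xr i (tl t))) = (\<Prod>i\<in>L m. cc (xr (tl t) i))"
    by (simp add: xr_comm)
  also have "\<dots> = (\<Prod>i\<in>L m. cc i)" using prod_L_reindex[OF lt, of cc] .
  finally show ?thesis using prod_cc[OF assms(1)] pm_pow_even[OF c(1) assms(1)] by simp
qed

lemma xr_3: "length a = length b \<Longrightarrow> length b = length c \<Longrightarrow> xr (xr a b) c = xr b (xr c a)"
  by (metis xr_assoc xr_comm length_xr min.idem)

lemma M_comp:
  assumes m: "m \<ge> 1"
    and 1: "length t1 = Suc m" "pme e1" "inv1 m t1 e1" "inv2 m t1 e1"
    and 2: "length t2 = Suc m" "pme e2" "inv1 m t2 e2" "inv2 m t2 e2"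
  shows "inv1 m (xr t2 t1) (\<lambda>j. e1 j * e2 (xr t1 j)) \<and> inv2 m (xr t2 t1) (\<lambda>j. e1 j * e2 (xr t1 j))"
proof -
  obtain a1 t1' where t1: "t1 = a1 # t1'" "length t1' = m" using 1 by (cases t1) auto
  obtain a2 t2' where t2: "t2 = a2 # t2'" "length t2' = m" using 2 by (cases t2) auto
  obtain c1 where c1: "pm c1" "\<And>i. length i = m \<Longrightarrow> e1 (False#i) * e1 (True#i) = c1 * cc i * cc (xr i t1')"
    using 1(3) t1 unfolding inv1_def by auto
  obtain c2 where c2: "pm c2" "\<And>i. length i = m \<Longrightarrow> e2 (False#i) * e2 (True#i) = c2 * cc i * cc (xr i t2')"
    using 2(3) t2 unfolding inv1_def by auto
  have I1: "inv1 m (xr t2 t1) (\<lambda>j. e1 j * e2 (xr t1 j))"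
    unfolding inv1_def
  proof (intro exI[of _ "c1 * c2"] conjI allI impI)
    show "pm (c1 * c2)" using c1 c2 pm_mult by blast
    fix i :: "bool list" assume i: "length i = m"
    let ?k = "xr t1' i"
    have k: "length ?k = m" using i t1 by simp
    have p2: "e2 (a1 # ?k) * e2 ((\<not> a1) # ?k) = c2 * cc ?k * cc (xr ?k t2')"
      using c2(2)[OF k] by (cases a1) (simp_all add: mult.commute)
    have x3: "xr ?k t2' = xr i (xr t2' t1')" using xr_3[of t1' i t2'] i t1 t2 by simp
    have ck: "cc ?k = cc (xr i t1')" by (simp add: xr_comm)
    have "(e1 (False#i) * e2 (xr t1 (False#i))) * (e1 (True#i) * e2 (xr t1 (True#i)))
        = (e1 (False#i) * e1 (True#i)) * (e2 (a1 # ?k) * e2 ((\<not> a1) # ?k))"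
      using t1 by (simp add: mult_ac)
    also have "\<dots> = (c1 * cc i * cc (xr i t1')) * (c2 * cc (xr i t1') * cc (xr i (xr t2' t1')))"
      unfolding c1(2)[OF i] p2 x3 ck ..
    also have "\<dots> = c1 * c2 * cc i * cc (xr i (tl (xr t2 t1)))"
      using t1 t2 by (simp add: mult_ac)
    finally show "(e1 (False#i) * e2 (xr t1 (False#i))) * (e1 (True#i) * e2 (xr t1 (True#i)))
        = c1 * c2 * cc i * cc (xr i (tl (xr t2 t1)))" .
  qed
  have "(\<Prod>i\<in>L m. e1 (False#i) * e2 (xr t1 (False#i)))
      = (\<Prod>i\<in>L m. e1 (False#i)) * (\<Prod>i\<in>L m. e2 (a1 # xr t1' i))"
    using t1 by (simp add: prod.distrib)
  also have "(\<Prod>i\<in>L m. e2 (a1 # xr t1' i)) = (\<Prod>i\<in>L m. e2 (a1 # i))"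
    using prod_L_reindex[OF t1(2), of "\<lambda>k. e2 (a1 # k)"] .
  also have "\<dots> = (\<Prod>i\<in>L m. e2 (False # i))"
    using prodT[OF m 2(2,3,1)] by (cases a1) auto
  finally have "inv2 m (xr t2 t1) (\<lambda>j. e1 j * e2 (xr t1 j))"
    using 1(4) 2(4) t1 t2 unfolding inv2_def by auto
  with I1 show ?thesis by blast
qed

lemma M_inv:
  assumes m: "m \<ge> 1"
    and 1: "length t = Suc m" "pme e" "inv1 m t e" "inv2 m t e"
  shows "inv1 m t (\<lambda>j. e (xr t j)) \<and> inv2 m t (\<lambda>j. e (xr t j))"
proof -
  obtain a t' where t: "t = a # t'" "length t' = m" using 1 by (cases t) auto
  obtain c where c: "pm c" "\<And>i. length i = m \<Longrightarrow> e (False#i) * e (True#i) = c * cc i * cc (xr i t')"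
    using 1(3) t unfolding inv1_def by auto
  have I1: "inv1 m t (\<lambda>j. e (xr t j))"
    unfolding inv1_def
  proof (intro exI[of _ c] conjI allI impI)
    show "pm c" by fact
    fix i :: "bool list" assume i: "length i = m"
    let ?k = "xr t' i"
    have k: "length ?k = m" using i t by simp
    have p: "e (a # ?k) * e ((\<not> a) # ?k) = c * cc ?k * cc (xr ?k t')"
      using c(2)[OF k] by (cases a) (simp_all add: mult.commute)
    have x: "xr ?k t' = i" using i t xr_cancel2[of i t'] xr_comm[of "xr t' i" t'] by simp
    have "e (xr t (False#i)) * e (xr t (True#i)) = e (a # ?k) * e ((\<not> a) # ?k)"
      using t by simp
    also have "\<dots> = c * cc i * cc (xr i (tl t))" unfolding p x using t by (simp add: xr_comm mult_ac)
    finally show "e (xr t (False#i)) * e (xr t (True#i)) = c * cc i * cc (xr i (tl t))" .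
  qed
  have "(\<Prod>i\<in>L m. e (xr t (False#i))) = (\<Prod>i\<in>L m. e (a # xr t' i))"
    using t by simp
  also have "\<dots> = (\<Prod>i\<in>L m. e (a # i))"
    using prod_L_reindex[OF t(2), of "\<lambda>k. e (a # k)"] .
  also have "\<dots> = (\<Prod>i\<in>L m. e (False # i))"
    using prodT[OF m 1(2,3,1)] by (cases a) auto
  finally have "inv2 m t (\<lambda>j. e (xr t j))"
    using 1(4) unfolding inv2_def by auto
  with I1 show ?thesis by blast
qed

lemma BG_mult: "f \<in> Bij S \<Longrightarrow> g \<in> Bij S \<Longrightarrow> f \<otimes>\<^bsub>BijGroup S\<^esub> g = compose S f g"
  by (simp add: BijGroup_def)
lemma BG_one: "\<one>\<^bsub>BijGroup S\<^esub> = (\<lambda>x\<in>S. x)"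
  by (simp add: BijGroup_def)
lemma BG_carrier: "carrier (BijGroup S) = Bij S"
  by (simp add: BijGroup_def)

lemma id_M: "st (Suc m) (zs (Suc m)) (\<lambda>_. 1) \<in> M m"
  unfolding M_def
proof (intro CollectI exI conjI)
  show "pme (\<lambda>_. 1::int)" by (simp add: pme_def)
  show "inv1 m (zs (Suc m)) (\<lambda>_. 1)" unfolding inv1_def
    by (intro exI[of _ 1]) auto
  show "inv2 m (zs (Suc m)) (\<lambda>_. 1)" unfolding inv2_def by simp
qed auto

lemma M_subgroup: assumes "m \<ge> 1" shows "subgroup (M m) (BijGroup (Q (Suc m)))"
proof (rule group.subgroupI[OF group_BijGroup])
  show "M m \<subseteq> carrier (BijGroup (Q (Suc m)))"
    unfolding M_def BG_carrier using st_Bij by blast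
  show "M m \<noteq> {}" using id_M by blast
next
  fix f assume "f \<in> M m"
  then obtain t e where f: "f = st (Suc m) t e" "length t = Suc m" "pme e" "inv1 m t e" "inv2 m t e"
    unfolding M_def by blast
  have pe: "pme (\<lambda>j. e (xr t j))" using f by (simp add: pme_def)
  have g: "st (Suc m) t (\<lambda>j. e (xr t j)) \<in> M m"
    using M_inv[OF assms f(2-5)] f pe unfolding M_def by blast
  have "inv\<^bsub>BijGroup (Q (Suc m))\<^esub> f = st (Suc m) t (\<lambda>j. e (xr t j))"
  proof (rule group.inv_equality[OF group_BijGroup])
    show "st (Suc m) t (\<lambda>j. e (xr t j)) \<otimes>\<^bsub>BijGroup (Q (Suc m))\<^esub> f = \<one>\<^bsub>BijGroup (Q (Suc m))\<^esub>"
      unfolding f(1) BG_one by (subst BG_mult) (auto intro: st_Bij f pe st_inv[OF f(2,3)])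
    show "f \<in> carrier (BijGroup (Q (Suc m)))" unfolding f(1) BG_carrier by (rule st_Bij[OF f(2,3)])
    show "st (Suc m) t (\<lambda>j. e (xr t j)) \<in> carrier (BijGroup (Q (Suc m)))"
      unfolding BG_carrier by (rule st_Bij[OF f(2) pe])
  qed
  with g show "inv\<^bsub>BijGroup (Q (Suc m))\<^esub> f \<in> M m" by simp
next
  fix f g assume "f \<in> M m" "g \<in> M m"
  then obtain t1 e1 t2 e2 where
    f: "f = st (Suc m) t1 e1" "length t1 = Suc m" "pme e1" "inv1 m t1 e1" "inv2 m t1 e1" and
    g: "g = st (Suc m) t2 e2" "length t2 = Suc m" "pme e2" "inv1 m t2 e2" "inv2 m t2 e2"
    unfolding M_def by blast
  have "f \<otimes>\<^bsub>BijGroup (Q (Suc m))\<^esub> g = compose (Q (Suc m)) f g"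
    using f g st_Bij by (simp add: BG_mult)
  also have "\<dots> = st (Suc m) (xr t1 t2) (\<lambda>j. e2 j * e1 (xr t2 j))"
    unfolding f(1) g(1) by (rule st_comp[OF g(2) f(2) g(3) f(3)])
  moreover have "length (xr t1 t2) = Suc m" using f g by simp
  ultimately show "f \<otimes>\<^bsub>BijGroup (Q (Suc m))\<^esub> g \<in> M m"
    using M_comp[OF assms g(2-5) f(2-5)] pme_mult[OF g(3) f(3), of "xr t2"] unfolding M_def
    by (intro CollectI exI[of _ "xr t1 t2"] exI[of _ "\<lambda>j. e2 j * e1 (xr t2 j)"]) auto
qed

lemma Ltr_M: assumes m: "m \<ge> 2" and x: "x \<in> Q (Suc m)" shows "Ltr (Suc m) x \<in> M m"
proof -
  note X = Q_elem[OF x]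
  obtain a u where u: "sh x = a # u" "length u = m" using X by (cases "sh x") auto
  let ?e = "\<lambda>j. sg x * sig (sh x) j"
  have pe: "pme ?e" unfolding pme_def using X sig_pm pm_mult by blast
  have sgsq: "sg x * sg x = 1" using X by auto
  have I1: "inv1 m (sh x) ?e" unfolding inv1_def
  proof (cases a)
    case True
    show "\<exists>c. pm c \<and> (\<forall>i. length i = m \<longrightarrow> ?e (False # i) * ?e (True # i) = c * cc i * cc (xr i (tl (sh x))))"
    proof (intro exI[of _ "- cc u"] conjI allI impI)
      show "pm (- cc u)" using cc_pm[of u] by auto
      fix i :: "bool list" assume i: "length i = m"
      have "?e (False # i) * ?e (True # i) = (sg x * sg x) * (- (sig u i * sig i u) * (cc i * cc i))"
        using u True by (simp add: mult_ac)
      also have "\<dots> = - cc u * cc i * cc (xr i (tl (sh x)))"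
        using sgsq comm[of u i] u i by (simp add: xr_comm)
      finally show "?e (False # i) * ?e (True # i) = - cc u * cc i * cc (xr i (tl (sh x)))" .
    qed
  next
    case False
    show "\<exists>c. pm c \<and> (\<forall>i. length i = m \<longrightarrow> ?e (False # i) * ?e (True # i) = c * cc i * cc (xr i (tl (sh x))))"
    proof (intro exI[of _ "cc u"] conjI allI impI)
      show "pm (cc u)" using cc_pm[of u] by auto
      fix i :: "bool list" assume i: "length i = m"
      have "?e (False # i) * ?e (True # i) = (sg x * sg x) * (sig u i * sig i u)"
        using u False by (simp add: mult_ac)
      also have "\<dots> = cc u * cc i * cc (xr i (tl (sh x)))"
        using sgsq comm[of u i] u i by (simp add: xr_comm)
      finally show "?e (False # i) * ?e (True # i) = cc u * cc i * cc (xr i (tl (sh x)))" .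
    qed
  qed
  have m1: "m \<ge> 1" using m by simp
  have "(\<Prod>i\<in>L m. ?e (False # i)) = sg x ^ (2 ^ m) * (\<Prod>i\<in>L m. sig (sh x) (False # i))"
    by (simp add: prod.distrib prod_L_const card_L)
  also have "sg x ^ (2 ^ m) = 1" using pm_pow_even[OF _ m1] X by blast
  also have "(\<Prod>i\<in>L m. sig (sh x) (False # i)) = (if a then -1 else 1)"
  proof (cases a)
    case True
    then have "(\<Prod>i\<in>L m. sig (sh x) (False # i)) = (\<Prod>i\<in>L m. sig u i) * (\<Prod>i\<in>L m. cc i)"
      using u by (simp add: prod.distrib)
    then show ?thesis using True prod_sig_row[OF m u(2)] prod_cc[OF m1] by simp
  next
    case False
    then show ?thesis using u prod_sig_row[OF m u(2)] by simp
  qed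
  finally have I2: "inv2 m (sh x) ?e" unfolding inv2_def using u by simp
  show ?thesis unfolding Ltr_st[OF x] M_def using X I1 I2 pe by blast
qed

lemma Mlt_l_M: assumes "m \<ge> 2" shows "Mlt_l (Suc m) \<subseteq> M m"
  unfolding Mlt_l_def
  by (rule group.generate_subgroup_incl[OF group_BijGroup])
     (use Ltr_M[OF assms] M_subgroup[of m] assms in auto)

lemma cd_one_bas: "cd_one n = bas (zs n)"
  by (induction n) auto

definition D :: "nat \<Rightarrow> (cd \<Rightarrow> cd) set" where
  "D m = {st (Suc m) (zs (Suc m)) e | e. pme e \<and>
      (\<exists>c. pm c \<and> (\<forall>i. length i = m \<longrightarrow> e (True#i) = c * e (False#i))) \<and>
      (\<Prod>i\<in>L m. e (False#i)) = 1 \<and> e (zs (Suc m)) = 1}"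

lemma st_one: "length t = n \<Longrightarrow> pme e \<Longrightarrow> st n t e (cd_one n) = smul (e (zs n)) (bas t)"
proof -
  assume "length t = n" "pme e"
  have "cd_one n \<in> Q n" unfolding cd_one_bas using Q_intro[of 1 "zs n" n] by simp
  then show ?thesis using \<open>length t = n\<close> by (simp add: st_apply cd_one_bas)
qed

lemma Inn_l_D: assumes "m \<ge> 2" shows "Inn_l (Suc m) \<subseteq> D m"
proof
  fix f assume "f \<in> Inn_l (Suc m)"
  then have fM: "f \<in> M m" and f1: "f (cd_one (Suc m)) = cd_one (Suc m)"
    using Mlt_l_M[OF assms] unfolding Inn_l_def by auto
  then obtain t e where f: "f = st (Suc m) t e" "length t = Suc m" "pme e" "inv1 m t e" "inv2 m t e"
    unfolding M_def by blast
  have eq: "smul (e (zs (Suc m))) (bas t) = bas (zs (Suc m))"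
    using f1 st_one[OF f(2,3)] f(1) cd_one_bas by simp
  have t: "t = zs (Suc m)" using arg_cong[OF eq, of sh] by simp
  have e0: "e (zs (Suc m)) = 1" using arg_cong[OF eq, of sg] pmeD[OF f(3)] by simp
  obtain c where c: "pm c" "\<And>i. length i = m \<Longrightarrow> e (False#i) * e (True#i) = c * cc i * cc (xr i (tl t))"
    using f(4) unfolding inv1_def by auto
  have "e (True#i) = c * e (False#i)" if i: "length i = m" for i
  proof -
    have "e (False#i) * e (True#i) = c" using c(2)[OF i] t i by (simp del: replicate_Suc)
    then have "e (False#i) * (e (False#i) * e (True#i)) = e (False#i) * c" by simp
    then show ?thesis using f(3) by (simp add: mult.assoc[symmetric] mult.commute)
  qed
  moreover have "(\<Prod>i\<in>L m. e (False#i)) = 1" using f(5) t unfolding inv2_def by simp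
  ultimately show "f \<in> D m" unfolding D_def using f(1,3) t e0 c(1) by blast
qed


lemma st_inj: assumes "st n t e = st n t' e'" "length t = n" "length t' = n" "pme e" "pme e'"
  shows "t = t' \<and> (\<forall>j. length j = n \<longrightarrow> e j = e' j)"
proof -
  have k: "smul (e j) (bas (xr t j)) = smul (e' j) (bas (xr t' j))" if "length j = n" for j
  proof -
    have "bas j \<in> Q n" using Q_intro[of 1 j n] that by simp
    then show ?thesis using fun_cong[OF assms(1), of "bas j"] by (simp add: st_apply)
  qed
  have "e j = e' j" if "length j = n" for j
    using arg_cong[OF k[OF that], of sg] pmeD[OF assms(4)] pmeD[OF assms(5)] by simp
  moreover have "t = t'" using arg_cong[OF k[of "zs n"], of sh] assms(2,3) by simp
  ultimately show ?thesis by blast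
qed

lemma Ltr_carrier: "Ltr n ` Q n \<subseteq> carrier (BijGroup (Q n))"
proof
  fix f assume "f \<in> Ltr n ` Q n"
  then obtain x where x: "x \<in> Q n" "f = Ltr n x" by blast
  have "pme (\<lambda>j. sg x * sig (sh x) j)" unfolding pme_def using Q_elem[OF x(1)] sig_pm pm_mult by blast
  then show "f \<in> carrier (BijGroup (Q n))"
    unfolding x(2) Ltr_st[OF x(1)] BG_carrier using st_Bij Q_elem[OF x(1)] by blast
qed

lemma Mlt_sub: "subgroup (Mlt_l n) (BijGroup (Q n))"
  unfolding Mlt_l_def by (rule group.generate_is_subgroup[OF group_BijGroup Ltr_carrier])

lemma Ltr_in: "x \<in> Q n \<Longrightarrow> Ltr n x \<in> Mlt_l n"
  unfolding Mlt_l_def by (rule generate.incl) blast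

lemma Mlt_mult: "f \<in> Mlt_l n \<Longrightarrow> g \<in> Mlt_l n \<Longrightarrow> f \<otimes>\<^bsub>BijGroup (Q n)\<^esub> g \<in> Mlt_l n"
  using subgroup.m_closed[OF Mlt_sub] by blast

lemma bas_Q: "length l = n \<Longrightarrow> bas l \<in> Q n"
  using Q_intro[of 1 l n] by simp

lemma Ltr_bas: "length l = n \<Longrightarrow> st n l (sig l) \<in> Mlt_l n"
  using Ltr_in[OF bas_Q, of l n] Ltr_st[OF bas_Q, of l n] by simp

lemma pme_sig: "pme (sig l)" by (simp add: pme_def sig_pm)
lemma pme_one: "pme (\<lambda>_. 1)" by (simp add: pme_def)
lemma pme_mone: "pme (\<lambda>_. -1)" by (simp add: pme_def)

lemma st_mult: "length t1 = n \<Longrightarrow> length t2 = n \<Longrightarrow> pme e1 \<Longrightarrow> pme e2 \<Longrightarrow>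
  st n t2 e2 \<otimes>\<^bsub>BijGroup (Q n)\<^esub> st n t1 e1 = st n (xr t2 t1) (\<lambda>j. e1 j * e2 (xr t1 j))"
proof -
  assume a: "length t1 = n" "length t2 = n" "pme e1" "pme e2"
  have "st n t2 e2 \<otimes>\<^bsub>BijGroup (Q n)\<^esub> st n t1 e1 = compose (Q n) (st n t2 e2) (st n t1 e1)"
    by (rule BG_mult[OF st_Bij[OF a(2,4)] st_Bij[OF a(1,3)]])
  then show ?thesis using st_comp[OF a] by simp
qed

lemma neg_in: "st n (zs n) (\<lambda>_. -1) \<in> Mlt_l n"
proof -
  have q: "cd_neg (bas (zs n)) \<in> Q n" using Q_intro[of "-1" "zs n" n] by (simp add: smul_def)
  have "Ltr n (cd_neg (bas (zs n))) = st n (zs n) (\<lambda>j. - sig (zs n) j)"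
    using Ltr_st[OF q] by simp
  also have "\<dots> = st n (zs n) (\<lambda>_. -1)" by (rule st_cong) (simp add: sig_zs)
  finally show ?thesis using Ltr_in[OF q] by simp
qed

lemma Fv_in: assumes "length v = m"
  shows "st (Suc m) (zs (Suc m)) (\<lambda>j. cc (tl j) * cc (xr (tl j) v)) \<in> Mlt_l (Suc m)"
proof -
  let ?n = "Suc m"
  let ?z = "zs m"
  have l1: "length (True # ?z) = ?n" "length (True # v) = ?n" "length (False # v) = ?n" using assms by auto
  have A: "st ?n (True # v) (sig (True # v)) \<otimes>\<^bsub>BijGroup (Q ?n)\<^esub> st ?n (True # ?z) (sig (True # ?z))
     = st ?n (False # v) (\<lambda>j. sig (True # ?z) j * sig (True # v) (xr (True # ?z) j))"
    using st_mult[OF l1(1,2) pme_sig pme_sig] assms by simp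
  have pe1: "pme (\<lambda>j. sig (True # ?z) j * sig (True # v) (xr (True # ?z) j))"
    by (rule pme_mult[OF pme_sig pme_sig])
  let ?e1 = "\<lambda>j. sig (True # ?z) j * sig (True # v) (xr (True # ?z) j)"
  have B: "st ?n (False # v) (sig (False # v)) \<otimes>\<^bsub>BijGroup (Q ?n)\<^esub> st ?n (False # v) ?e1
     = st ?n (zs ?n) (\<lambda>j. ?e1 j * sig (False # v) (xr (False # v) j))"
    using st_mult[OF l1(3) l1(3) pe1 pme_sig] assms by simp
  let ?e2 = "\<lambda>j. ?e1 j * sig (False # v) (xr (False # v) j)"
  have pe2: "pme ?e2" by (rule pme_mult[OF pe1 pme_sig])
  have C: "st ?n (zs ?n) (\<lambda>_. -1) \<otimes>\<^bsub>BijGroup (Q ?n)\<^esub> st ?n (zs ?n) ?e2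
      = st ?n (zs ?n) (\<lambda>j. ?e2 j * -1)"
    using st_mult[of "zs ?n" ?n "zs ?n" ?e2 "\<lambda>_. -1"] pe2 pme_mone by simp
  have E: "?e2 j * -1 = cc (tl j) * cc (xr (tl j) v)" if j: "length j = ?n" for j
  proof -
    obtain a i where ai: "j = a # i" "length i = m" using j by (cases j) auto
    have c1: "sig i v = cc i * cc v * cc (xr i v) * sig v i" using comm'[of i v] ai assms by simp
    have c2: "sig v i = cc v * cc i * cc (xr v i) * sig i v" using comm'[of v i] ai assms by simp
    have AB: "sig v i * sig v (xr i v) = cc v" "sig i v * sig (xr i v) v = cc v"
      using altAB[of v i] ai assms by auto
    show ?thesis
    proof (cases a)
      case False
      have "?e2 j * -1 = cc i * (cc i * sig i v) * sig v (xr v i)"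
        using ai False assms by (simp add: sig_zs mult_ac)
      also have "\<dots> = sig i v * sig v (xr i v)" by (simp add: xr_comm mult.assoc[symmetric])
      also have "\<dots> = cc i * cc v * cc (xr i v) * (sig v i * sig v (xr i v))"
        by (subst c1) (simp add: mult_ac)
      also have "\<dots> = cc (tl j) * cc (xr (tl j) v)" using AB ai by (simp add: mult_ac)
      finally show ?thesis .
    next
      case True
      have "?e2 j * -1 = cc i * (cc i * sig v i) * sig (xr v i) v"
        using ai True assms by (simp add: sig_zs mult_ac)
      also have "\<dots> = sig v i * sig (xr i v) v" by (simp add: xr_comm mult.assoc[symmetric])
      also have "\<dots> = cc v * cc i * cc (xr v i) * (sig i v * sig (xr i v) v)"
        by (subst c2) (simp add: mult_ac)
      also have "\<dots> = cc (tl j) * cc (xr (tl j) v)" using AB ai by (simp add: mult_ac xr_comm)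
      finally show ?thesis .
    qed
  qed
  have "st ?n (zs ?n) (\<lambda>j. cc (tl j) * cc (xr (tl j) v)) =
    st ?n (zs ?n) (\<lambda>_. -1) \<otimes>\<^bsub>BijGroup (Q ?n)\<^esub> (st ?n (False # v) (sig (False # v)) \<otimes>\<^bsub>BijGroup (Q ?n)\<^esub>
      (st ?n (True # v) (sig (True # v)) \<otimes>\<^bsub>BijGroup (Q ?n)\<^esub> st ?n (True # ?z) (sig (True # ?z))))"
    unfolding A B C
  proof (rule st_cong)
    fix j :: "bool list" assume "length j = ?n"
    from E[OF this] show "cc (tl j) * cc (xr (tl j) v) = ?e2 j * -1" by simp
  qed
  also have "\<dots> \<in> Mlt_l ?n"
    by (intro Mlt_mult neg_in Ltr_bas l1)
  finally show ?thesis .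
qed

definition eS :: "bool list set \<Rightarrow> bool list \<Rightarrow> int" where
  "eS A j = (if tl j \<in> A then -1 else 1)"

lemma pme_eS: "pme (eS A)" by (simp add: pme_def eS_def)

lemma one_in: "st n (zs n) (\<lambda>_. 1) \<in> Mlt_l n"
  using subgroup.one_closed[OF Mlt_sub] by (simp add: BG_one st_id)

lemma Fv_in': assumes "length v = m" "v \<noteq> zs m"
  shows "st (Suc m) (zs (Suc m)) (eS {zs m, v}) \<in> Mlt_l (Suc m)"
proof -
  have "st (Suc m) (zs (Suc m)) (eS {zs m, v}) = st (Suc m) (zs (Suc m)) (\<lambda>j. cc (tl j) * cc (xr (tl j) v))"
  proof (rule st_cong)
    fix j :: "bool list" assume "length j = Suc m"
    then obtain a i where ai: "j = a # i" "length i = m" by (cases j) auto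
    have "cc i = (if i = zs m then 1 else -1)" using cc_zero[of i] ai cc_pm[of i] by auto
    moreover have "cc (xr i v) = (if i = v then 1 else -1)"
      using cc_zero[of "xr i v"] xr_eq_zs[of i v] ai assms cc_pm[of "xr i v"] by auto
    ultimately show "eS {zs m, v} j = cc (tl j) * cc (xr (tl j) v)"
      using ai assms by (auto simp: eS_def)
  qed
  then show ?thesis using Fv_in[OF assms(1)] by simp
qed

lemma gen_even: assumes "finite B" "B \<subseteq> L m - {zs m}"
  shows "st (Suc m) (zs (Suc m)) (eS (B \<union> (if odd (card B) then {zs m} else {}))) \<in> Mlt_l (Suc m)"
  using assms
proof (induction B rule: finite_induct)
  case empty
  have "st (Suc m) (zs (Suc m)) (eS {}) = st (Suc m) (zs (Suc m)) (\<lambda>_. 1)"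
    by (rule st_cong) (simp add: eS_def)
  then show ?case using one_in[of "Suc m"] by (simp del: replicate_Suc)
next
  case (insert v B)
  have v: "length v = m" "v \<noteq> zs m" using insert(4) by (auto simp: L_def)
  let ?P = "B \<union> (if odd (card B) then {zs m} else {})"
  have "st (Suc m) (zs (Suc m)) (eS {zs m, v}) \<otimes>\<^bsub>BijGroup (Q (Suc m))\<^esub> st (Suc m) (zs (Suc m)) (eS ?P)
     = st (Suc m) (zs (Suc m)) (\<lambda>j. eS ?P j * eS {zs m, v} (xr (zs (Suc m)) j))"
    using st_mult[of "zs (Suc m)" "Suc m" "zs (Suc m)" "eS ?P" "eS {zs m, v}"] pme_eS
    by (simp del: replicate_Suc)
  also have "\<dots> = st (Suc m) (zs (Suc m)) (eS (insert v B \<union> (if odd (card (insert v B)) then {zs m} else {})))"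
  proof (rule st_cong)
    fix j :: "bool list" assume j: "length j = Suc m"
    then have "xr (zs (Suc m)) j = j" by (simp del: replicate_Suc)
    then show "eS ?P j * eS {zs m, v} (xr (zs (Suc m)) j) =
      eS (insert v B \<union> (if odd (card (insert v B)) then {zs m} else {})) j"
      using insert(1,2,4) v by (auto simp: eS_def)
  qed
  finally show ?case using Mlt_mult[OF Fv_in'[OF v] insert(3)] insert(4) by simp
qed

lemma prod_sign: assumes "pme e"
  shows "(\<Prod>i\<in>L m. e (False#i)) = (-1) ^ card {i \<in> L m. e (False#i) = -1}"
proof -
  have "(\<Prod>i\<in>L m. e (False#i)) = (\<Prod>i\<in>L m. if e (False#i) = -1 then -1 else 1)"
  proof (rule prod.cong[OF refl])
    fix i show "e (False#i) = (if e (False#i) = -1 then -1 else 1)" using pmeD[OF assms, of "False#i"] by auto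
  qed
  also have "\<dots> = (-1) ^ card {i \<in> L m. e (False#i) = -1}"
    by (simp add: prod.If_cases Int_def)
  finally show ?thesis .
qed

lemma D_plus: assumes "pme e" "\<And>i. length i = m \<Longrightarrow> e (True#i) = e (False#i)"
    "(\<Prod>i\<in>L m. e (False#i)) = 1"
  shows "st (Suc m) (zs (Suc m)) e \<in> Mlt_l (Suc m)"
proof -
  define A where "A = {i \<in> L m. e (False#i) = -1}"
  have fA: "finite A" unfolding A_def by simp
  have evA: "even (card A)" using assms(3) prod_sign[OF assms(1), of m] unfolding A_def
    by (metis neg_one_odd_power one_neq_neg_one)
  define B where "B = A - {zs m}"
  have B: "finite B" "B \<subseteq> L m - {zs m}" using fA unfolding B_def A_def by auto
  have "B \<union> (if odd (card B) then {zs m} else {}) = A"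
  proof (cases "zs m \<in> A")
    case True
    then have "card A = Suc (card B)" unfolding B_def using card_Suc_Diff1[OF fA True] by simp
    then show ?thesis using evA True unfolding B_def by auto
  next
    case False
    then show ?thesis using evA unfolding B_def by auto
  qed
  then have "st (Suc m) (zs (Suc m)) (eS A) \<in> Mlt_l (Suc m)" using gen_even[OF B] by simp
  moreover have "st (Suc m) (zs (Suc m)) (eS A) = st (Suc m) (zs (Suc m)) e"
  proof (rule st_cong)
    fix j :: "bool list" assume "length j = Suc m"
    then obtain a i where ai: "j = a # i" "length i = m" by (cases j) auto
    have "e j = e (False # i)" using ai assms(2) by (cases a) auto
    then show "eS A j = e j" using ai pmeD[OF assms(1), of "False # i"]
      unfolding eS_def A_def L_def by auto
  qed
  ultimately show ?thesis by simp
qed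

lemma X_exists: assumes "m \<ge> 2"
  shows "\<exists>eX. pme eX \<and> st (Suc m) (zs (Suc m)) eX \<in> Mlt_l (Suc m) \<and>
     (\<forall>i. length i = m \<longrightarrow> eX (True#i) = - eX (False#i)) \<and> (\<Prod>i\<in>L m. eX (False#i)) = 1"
proof -
  obtain k where k: "m = Suc (Suc k)" using assms by (metis add_2_eq_Suc le_Suc_ex)
  define u where "u = True # zs (Suc k)"
  define v where "v = False # True # zs k"
  define w where "w = True # True # zs k"
  let ?n = "Suc m"
  have l: "length (False # u) = ?n" "length (False # v) = ?n" "length (False # w) = ?n"
    using k by (auto simp: u_def v_def w_def)
  have xuv: "xr (False # v) (False # w) = False # u" "xr (False # u) (False # u) = zs ?n"
    using k by (auto simp: u_def v_def w_def simp del: replicate_Suc)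
  let ?e1 = "\<lambda>j. sig (False # w) j * sig (False # v) (xr (False # w) j)"
  have pe1: "pme ?e1" by (rule pme_mult[OF pme_sig pme_sig])
  have in1: "st ?n (False # v) (sig (False # v)) \<otimes>\<^bsub>BijGroup (Q ?n)\<^esub> st ?n (False # w) (sig (False # w))
      = st ?n (False # u) ?e1"
    using st_mult[OF l(3) l(2) pme_sig pme_sig] xuv by simp
  define eX where "eX = (\<lambda>j. ?e1 j * sig (False # u) (xr (False # u) j))"
  have peX: "pme eX" unfolding eX_def by (rule pme_mult[OF pe1 pme_sig])
  have in2: "st ?n (False # u) (sig (False # u)) \<otimes>\<^bsub>BijGroup (Q ?n)\<^esub> st ?n (False # u) ?e1
      = st ?n (zs ?n) eX"
    using st_mult[OF l(1) l(1) pe1 pme_sig] xuv unfolding eX_def by simp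
  have XM: "st ?n (zs ?n) eX \<in> Mlt_l ?n"
    unfolding in2[symmetric] in1[symmetric] by (intro Mlt_mult Ltr_bas l)
  then have "st ?n (zs ?n) eX \<in> M m" using Mlt_l_M[OF assms] by blast
  then obtain t e where te: "st ?n (zs ?n) eX = st ?n t e" "length t = ?n" "pme e" "inv1 m t e" "inv2 m t e"
    unfolding M_def by blast
  have tt: "t = zs ?n" and ee: "\<And>j. length j = ?n \<Longrightarrow> eX j = e j"
    using st_inj[OF te(1) _ te(2) peX te(3)] by auto
  obtain c where c: "pm c" "\<And>i. length i = m \<Longrightarrow> e (False#i) * e (True#i) = c * cc i * cc (xr i (tl t))"
    using te(4) unfolding inv1_def by auto
  have cX: "eX (False#i) * eX (True#i) = c" if "length i = m" for i
    using c(2)[OF that] ee[of "False#i"] ee[of "True#i"] that tt by (simp del: replicate_Suc)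
  have suu: "sig u u = cc u" using altAB[of u "zs m"] k sig_zs[of u m] by (simp add: u_def)
  have "eX (False # zs m) * eX (True # zs m) = sig v w * sig w v * (sig u u * sig u u)"
    unfolding eX_def using k sig_zs[of w m] sig_zs[of u m] by (simp add: u_def v_def w_def mult_ac del: replicate_Suc)
  also have "\<dots> = -1" using comm[of v w] k by (simp add: v_def w_def)
  finally have "c = -1" using cX[of "zs m"] by simp
  have "eX (True#i) = - eX (False#i)" if "length i = m" for i
  proof -
    have "eX (False#i) * (eX (False#i) * eX (True#i)) = - eX (False#i)"
      using cX[OF that] \<open>c = -1\<close> by simp
    then show ?thesis using peX by (simp add: mult.assoc[symmetric])
  qed
  moreover have "(\<Prod>i\<in>L m. eX (False#i)) = 1"
  proof -
    have "(\<Prod>i\<in>L m. eX (False#i)) = (\<Prod>i\<in>L m. e (False#i))"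
      by (rule prod.cong[OF refl]) (simp add: ee L_def)
    then show ?thesis using te(5) tt unfolding inv2_def by simp
  qed
  ultimately show ?thesis using peX XM by blast
qed

lemma D_Inn_l: assumes "m \<ge> 2" shows "D m \<subseteq> Inn_l (Suc m)"
proof
  fix d assume "d \<in> D m"
  then obtain e c where d: "d = st (Suc m) (zs (Suc m)) e" "pme e" "pm c"
    "\<And>i. length i = m \<Longrightarrow> e (True#i) = c * e (False#i)"
    "(\<Prod>i\<in>L m. e (False#i)) = 1" "e (zs (Suc m)) = 1"
    unfolding D_def by blast
  let ?n = "Suc m"
  have dM: "d \<in> Mlt_l ?n"
  proof (cases "c = 1")
    case True
    then show ?thesis using D_plus[OF d(2) _ d(5)] d(1,4) by simp
  next
    case False
    then have c: "c = -1" using d(3) by simp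
    obtain eX where X: "pme eX" "st ?n (zs ?n) eX \<in> Mlt_l ?n"
      "\<And>i. length i = m \<Longrightarrow> eX (True#i) = - eX (False#i)" "(\<Prod>i\<in>L m. eX (False#i)) = 1"
      using X_exists[OF assms] by blast
    have pe: "pme (\<lambda>j. eX j * e j)" using pme_mult[OF X(1) d(2), of id] by simp
    have "st ?n (zs ?n) (\<lambda>j. eX j * e j) \<in> Mlt_l ?n"
    proof (rule D_plus[OF pe])
      fix i :: "bool list" assume "length i = m"
      then show "eX (True#i) * e (True#i) = eX (False#i) * e (False#i)"
        using X(3) d(4) c by simp
    next
      show "(\<Prod>i\<in>L m. eX (False#i) * e (False#i)) = 1"
        using X(4) d(5) by (simp add: prod.distrib)
    qed
    then have "st ?n (zs ?n) (\<lambda>j. eX j * e j) \<otimes>\<^bsub>BijGroup (Q ?n)\<^esub> st ?n (zs ?n) eX \<in> Mlt_l ?n"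
      using X(2) Mlt_mult by blast
    also have "st ?n (zs ?n) (\<lambda>j. eX j * e j) \<otimes>\<^bsub>BijGroup (Q ?n)\<^esub> st ?n (zs ?n) eX
        = st ?n (xr (zs ?n) (zs ?n)) (\<lambda>j. eX j * (eX (xr (zs ?n) j) * e (xr (zs ?n) j)))"
      using st_mult[of "zs ?n" ?n "zs ?n" eX "\<lambda>j. eX j * e j"] X(1) pe by simp
    also have "\<dots> = d"
      unfolding d(1)
    proof (simp del: replicate_Suc, rule st_cong)
      fix j :: "bool list" assume "length j = ?n"
      then show "eX j * (eX (xr (zs ?n) j) * e (xr (zs ?n) j)) = e j"
        using X(1) by (simp del: replicate_Suc add: mult.assoc[symmetric])
    qed
    finally show ?thesis .
  qed
  moreover have "d (cd_one ?n) = cd_one ?n"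
    using st_one[of "zs ?n" ?n e] d(1,2,6) cd_one_bas by simp
  ultimately show "d \<in> Inn_l ?n" unfolding Inn_l_def by blast
qed

lemma Inn_l_eq: "m \<ge> 2 \<Longrightarrow> Inn_l (Suc m) = D m"
  using Inn_l_D D_Inn_l by blast


lemma Q_len: "x \<in> Q n \<Longrightarrow> pm (sg x) \<and> length (sh x) = n"
  using Q_elem by blast

lemma conj_Q: "x \<in> Q n \<Longrightarrow> cd_conj x = smul (sg x * cc (sh x)) (bas (sh x))"
proof -
  assume x: "x \<in> Q n"
  note X = Q_elem[OF x]
  have "cd_conj x = cd_conj (smul (sg x) (bas (sh x)))" using X by metis
  also have "\<dots> = smul (sg x * cc (sh x)) (bas (sh x))"
    unfolding conj_smul conj_bas using Q_len[OF x] cc_pm by (simp add: smul_mult)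
  finally show ?thesis .
qed

lemma conj_in_Q: "x \<in> Q n \<Longrightarrow> cd_conj x \<in> Q n"
  using conj_Q[of x n] Q_elem[of x n] cc_pm pm_mult Q_intro by metis

lemma conj_conj_Q: "x \<in> Q n \<Longrightarrow> cd_conj (cd_conj x) = x"
proof -
  assume x: "x \<in> Q n"
  note X = Q_elem[OF x]
  have p: "pm (sg x * cc (sh x))" using X cc_pm pm_mult by blast
  have "cd_conj (cd_conj x) = smul (sg x * cc (sh x) * cc (sh x)) (bas (sh x))"
    using conj_Q[OF conj_in_Q[OF x]] conj_Q[OF x] p by simp
  also have "\<dots> = smul (sg x) (bas (sh x))" by (simp add: mult.assoc)
  also have "\<dots> = x" using X by metis
  finally show ?thesis .
qed

lemma conj_mult_Q: assumes a: "a \<in> Q n" and b: "b \<in> Q n"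
  shows "cd_conj (cd_mult a b) = cd_mult (cd_conj b) (cd_conj a)"
proof -
  note A = Q_elem[OF a] and B = Q_elem[OF b]
  have pa: "pm (sg a * cc (sh a))" and pb: "pm (sg b * cc (sh b))" using A B cc_pm pm_mult by blast+
  have ca: "cd_conj a \<in> Q n" and cb: "cd_conj b \<in> Q n" using conj_in_Q a b by auto
  have sga: "sg (cd_conj a) = sg a * cc (sh a)" "sh (cd_conj a) = sh a" using conj_Q[OF a] pa by simp_all
  have sgb: "sg (cd_conj b) = sg b * cc (sh b)" "sh (cd_conj b) = sh b" using conj_Q[OF b] pb by simp_all
  have p: "pm (sg a * sg b * sig (sh a) (sh b))" using A B sig_pm pm_mult by blast
  have "cd_conj (cd_mult a b) = smul (sg a * sg b * sig (sh a) (sh b) * cc (xr (sh a) (sh b))) (bas (xr (sh a) (sh b)))"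
    unfolding mult_Q[OF a b] conj_smul conj_bas using p cc_pm by (simp add: smul_mult)
  also have "sig (sh a) (sh b) = cc (sh a) * cc (sh b) * cc (xr (sh a) (sh b)) * sig (sh b) (sh a)"
    using comm'[of "sh a" "sh b"] Q_len[OF a] Q_len[OF b] by simp
  also have "smul (sg a * sg b * (cc (sh a) * cc (sh b) * cc (xr (sh a) (sh b)) * sig (sh b) (sh a)) * cc (xr (sh a) (sh b))) (bas (xr (sh a) (sh b)))
     = cd_mult (cd_conj b) (cd_conj a)"
    unfolding mult_Q[OF cb ca] sga sgb by (simp add: xr_comm mult_ac)
  finally show ?thesis .
qed

definition J :: "nat \<Rightarrow> cd \<Rightarrow> cd" where "J n = (\<lambda>x\<in>Q n. cd_conj x)"

definition phi :: "nat \<Rightarrow> (cd \<Rightarrow> cd) \<Rightarrow> (cd \<Rightarrow> cd)" where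
  "phi n f = compose (Q n) (J n) (compose (Q n) f (J n))"

lemma phi_apply: "x \<in> Q n \<Longrightarrow> f (cd_conj x) \<in> Q n \<Longrightarrow> phi n f x = cd_conj (f (cd_conj x))"
  unfolding phi_def J_def compose_def using conj_in_Q by simp

lemma J_Bij: "J n \<in> Bij (Q n)"
proof -
  have "bij_betw (J n) (Q n) (Q n)"
    by (rule bij_betw_byWitness[where f'="J n"]) (auto simp: J_def conj_in_Q conj_conj_Q)
  then show ?thesis unfolding Bij_def J_def by simp
qed

lemma phi_Bij: "f \<in> Bij (Q n) \<Longrightarrow> phi n f \<in> Bij (Q n)"
  unfolding phi_def using J_Bij compose_Bij by metis

lemma Bij_Q: "f \<in> Bij (Q n) \<Longrightarrow> x \<in> Q n \<Longrightarrow> f x \<in> Q n"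
  using Bij_imp_funcset by blast

lemma phi_hom: "phi n \<in> hom (BijGroup (Q n)) (BijGroup (Q n))"
proof (rule homI)
  fix f assume "f \<in> carrier (BijGroup (Q n))"
  then show "phi n f \<in> carrier (BijGroup (Q n))" using phi_Bij by (simp add: BG_carrier)
next
  fix f g assume f: "f \<in> carrier (BijGroup (Q n))" and g: "g \<in> carrier (BijGroup (Q n))"
  then have f': "f \<in> Bij (Q n)" and g': "g \<in> Bij (Q n)" by (simp_all add: BG_carrier)
  have "phi n (compose (Q n) f g) = compose (Q n) (phi n f) (phi n g)"
  proof (rule ext)
    fix x show "phi n (compose (Q n) f g) x = compose (Q n) (phi n f) (phi n g) x"
    proof (cases "x \<in> Q n")
      case True
      have c: "cd_conj x \<in> Q n" using conj_in_Q True by blast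
      have gx: "g (cd_conj x) \<in> Q n" using Bij_Q[OF g' c] .
      have fgx: "f (g (cd_conj x)) \<in> Q n" using Bij_Q[OF f' gx] .
      have pg: "phi n g x \<in> Q n" using Bij_Q[OF phi_Bij[OF g'] True] .
      have e1: "phi n g x = cd_conj (g (cd_conj x))" using phi_apply[of x n g, OF True gx] .
      have fq: "f (cd_conj (phi n g x)) \<in> Q n" using Bij_Q[OF f' conj_in_Q[OF pg]] .
      have e2: "phi n f (phi n g x) = cd_conj (f (cd_conj (phi n g x)))"
        using phi_apply[of "phi n g x" n f, OF pg fq] .
      have "phi n (compose (Q n) f g) x = cd_conj (f (g (cd_conj x)))"
        using phi_apply[OF True] c fgx by (simp add: compose_def)
      also have "\<dots> = phi n f (phi n g x)"
        using e2 e1 conj_conj_Q[OF gx] by simp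
      finally show ?thesis using True by (simp add: compose_def)
    next
      case False then show ?thesis by (simp add: phi_def compose_def)
    qed
  qed
  then show "phi n (f \<otimes>\<^bsub>BijGroup (Q n)\<^esub> g) = phi n f \<otimes>\<^bsub>BijGroup (Q n)\<^esub> phi n g"
    using BG_mult[OF f' g'] BG_mult[OF phi_Bij[OF f'] phi_Bij[OF g']] by simp
qed

lemma phi_group_hom: "group_hom (BijGroup (Q n)) (BijGroup (Q n)) (phi n)"
  unfolding group_hom_def group_hom_axioms_def using group_BijGroup phi_hom by blast

lemma phi_Ltr: "x \<in> Q n \<Longrightarrow> phi n (Ltr n (cd_conj x)) = Rtr n x"
proof (rule ext)
  fix a assume x: "x \<in> Q n"
  have cx: "cd_conj x \<in> Q n" using conj_in_Q[OF x] .
  show "phi n (Ltr n (cd_conj x)) a = Rtr n x a"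
  proof (cases "a \<in> Q n")
    case True
    have ca: "cd_conj a \<in> Q n" using conj_in_Q[OF True] .
    have m: "Ltr n (cd_conj x) (cd_conj a) \<in> Q n"
    proof -
      have "Ltr n (cd_conj x) \<in> Bij (Q n)" using Ltr_carrier[of n] cx by (auto simp: BG_carrier)
      then show ?thesis using Bij_Q ca by blast
    qed
    have "phi n (Ltr n (cd_conj x)) a = cd_conj (cd_mult (cd_conj x) (cd_conj a))"
      using phi_apply[of a n "Ltr n (cd_conj x)", OF True m] ca by (simp add: Ltr_def)
    also have "\<dots> = cd_mult a x"
      using conj_mult_Q[OF cx ca] conj_conj_Q[OF True] conj_conj_Q[OF x] by simp
    finally show ?thesis using True by (simp add: Rtr_def)
  next
    case False then show ?thesis by (simp add: phi_def compose_def Rtr_def)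
  qed
qed

lemma Mlt_r_phi: "Mlt_r n = phi n ` Mlt_l n"
proof -
  have "phi n ` (Ltr n ` Q n) = Rtr n ` Q n"
  proof
    show "phi n ` Ltr n ` Q n \<subseteq> Rtr n ` Q n"
    proof
      fix f assume "f \<in> phi n ` Ltr n ` Q n"
      then obtain y where y: "y \<in> Q n" "f = phi n (Ltr n y)" by blast
      have "Ltr n y = Ltr n (cd_conj (cd_conj y))" using conj_conj_Q[OF y(1)] by simp
      then have "f = Rtr n (cd_conj y)" using phi_Ltr[OF conj_in_Q[OF y(1)]] y(2) by simp
      then show "f \<in> Rtr n ` Q n" using conj_in_Q[OF y(1)] by blast
    qed
    show "Rtr n ` Q n \<subseteq> phi n ` Ltr n ` Q n"
    proof
      fix f assume "f \<in> Rtr n ` Q n"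
      then obtain y where y: "y \<in> Q n" "f = Rtr n y" by blast
      then have "f = phi n (Ltr n (cd_conj y))" using phi_Ltr[OF y(1)] by simp
      then show "f \<in> phi n ` Ltr n ` Q n" using conj_in_Q[OF y(1)] by blast
    qed
  qed
  then show ?thesis
    unfolding Mlt_r_def Mlt_l_def
    using group_hom.generate_img[OF phi_group_hom[of n] Ltr_carrier[of n]] by simp
qed

lemma cd_one_Q: "cd_one n \<in> Q n" unfolding cd_one_bas by (rule bas_Q) simp

lemma conj_one: "cd_conj (cd_one n) = cd_one n"
  using conj_Q[OF cd_one_Q, of n] unfolding cd_one_bas by simp

lemma Inn_r_phi: "Inn_r n = phi n ` Inn_l n"
proof -
  have key: "phi n g (cd_one n) = cd_one n \<longleftrightarrow> g (cd_one n) = cd_one n" if g: "g \<in> Mlt_l n" for g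
  proof -
    have gB: "g \<in> Bij (Q n)" using g subgroup.subset[OF Mlt_sub] by (auto simp: BG_carrier)
    have go: "g (cd_one n) \<in> Q n" using Bij_Q[OF gB cd_one_Q] .
    have "phi n g (cd_one n) = cd_conj (g (cd_one n))"
      using phi_apply[OF cd_one_Q] conj_one go by metis
    then show ?thesis using conj_conj_Q[OF go] conj_one by metis
  qed
  show ?thesis
    unfolding Inn_r_def Inn_l_def Mlt_r_phi using key by auto
qed

lemma phi_diag: assumes "pme e" shows "phi n (st n (zs n) e) = st n (zs n) e"
proof (rule ext)
  fix x show "phi n (st n (zs n) e) x = st n (zs n) e x"
  proof (cases "x \<in> Q n")
    case True
    note X = Q_elem[OF True]
    have c: "cd_conj x \<in> Q n" using conj_in_Q[OF True] .
    have sx: "st n (zs n) e (cd_conj x) \<in> Q n" using st_Q[OF _ assms c] by simp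
    have p1: "pm (sg x * cc (sh x))" using X cc_pm pm_mult by blast
    have p2: "pm (sg x * cc (sh x) * e (sh x))" using p1 pmeD[OF assms] pm_mult by blast
    have "phi n (st n (zs n) e) x = cd_conj (st n (zs n) e (cd_conj x))"
      using phi_apply[of x n "st n (zs n) e", OF True sx] .
    also have "\<dots> = smul (sg x * cc (sh x) * e (sh x) * cc (sh x)) (bas (sh x))"
    proof -
      have sc: "sg (cd_conj x) = sg x * cc (sh x)" "sh (cd_conj x) = sh x"
        using conj_Q[OF True] p1 by simp_all
      show ?thesis unfolding st_apply[OF c] sc using p1 p2 Q_len[OF True]
        by (simp add: conj_smul conj_bas smul_mult cc_pm)
    qed
    also have "\<dots> = st n (zs n) e x" using Q_len[OF True] by (simp add: st_apply[OF True] mult_ac)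
    finally show ?thesis .
  next
    case False then show ?thesis by (simp add: phi_def compose_def st_def)
  qed
qed

lemma Inn_r_eq: assumes "m \<ge> 2" shows "Inn_r (Suc m) = Inn_l (Suc m)"
proof -
  have "phi (Suc m) ` D m = D m"
  proof -
    have "phi (Suc m) d = d" if "d \<in> D m" for d
      using that phi_diag unfolding D_def by blast
    then show ?thesis by force
  qed
  then show ?thesis using Inn_r_phi Inn_l_eq[OF assms] by simp
qed


lemma diag_mult: "pme e1 \<Longrightarrow> pme e2 \<Longrightarrow>
  st n (zs n) e2 \<otimes>\<^bsub>BijGroup (Q n)\<^esub> st n (zs n) e1 = st n (zs n) (\<lambda>j. e1 j * e2 j)"
proof -
  assume p: "pme e1" "pme e2"
  have "st n (zs n) e2 \<otimes>\<^bsub>BijGroup (Q n)\<^esub> st n (zs n) e1 = st n (zs n) (\<lambda>j. e1 j * e2 (xr (zs n) j))"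
    using st_mult[of "zs n" n "zs n" e1 e2] p by simp
  also have "\<dots> = st n (zs n) (\<lambda>j. e1 j * e2 j)" by (rule st_cong) simp
  finally show ?thesis .
qed

lemma D_elem: "d \<in> D m \<Longrightarrow> \<exists>e. d = st (Suc m) (zs (Suc m)) e \<and> pme e"
  unfolding D_def by blast

lemma D_one: "st (Suc m) (zs (Suc m)) (\<lambda>_. 1) \<in> D m"
  unfolding D_def by (intro CollectI exI[of _ "\<lambda>_. 1"]) (auto simp: pme_def intro: exI[of _ 1])

lemma D_mult: assumes "d1 \<in> D m" "d2 \<in> D m" shows "d1 \<otimes>\<^bsub>BijGroup (Q (Suc m))\<^esub> d2 \<in> D m"
proof -
  obtain e1 c1 where d1: "d1 = st (Suc m) (zs (Suc m)) e1" "pme e1" "pm c1"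
    "\<And>i. length i = m \<Longrightarrow> e1 (True#i) = c1 * e1 (False#i)"
    "(\<Prod>i\<in>L m. e1 (False#i)) = 1" "e1 (zs (Suc m)) = 1"
    using assms(1) unfolding D_def by blast
  obtain e2 c2 where d2: "d2 = st (Suc m) (zs (Suc m)) e2" "pme e2" "pm c2"
    "\<And>i. length i = m \<Longrightarrow> e2 (True#i) = c2 * e2 (False#i)"
    "(\<Prod>i\<in>L m. e2 (False#i)) = 1" "e2 (zs (Suc m)) = 1"
    using assms(2) unfolding D_def by blast
  have eq: "d1 \<otimes>\<^bsub>BijGroup (Q (Suc m))\<^esub> d2 = st (Suc m) (zs (Suc m)) (\<lambda>j. e2 j * e1 j)"
    unfolding d1(1) d2(1) by (rule diag_mult[OF d2(2) d1(2)])
  have pe: "pme (\<lambda>j. e2 j * e1 j)" using pme_mult[OF d2(2) d1(2), of id] by simp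
  show ?thesis unfolding eq D_def
  proof (intro CollectI exI[of _ "\<lambda>j. e2 j * e1 j"] conjI refl pe)
    show "\<exists>c. pm c \<and> (\<forall>i. length i = m \<longrightarrow> e2 (True # i) * e1 (True # i) = c * (e2 (False # i) * e1 (False # i)))"
      using d1(3,4) d2(3,4) pm_mult by (intro exI[of _ "c1 * c2"]) (auto simp: mult_ac)
    show "(\<Prod>i\<in>L m. e2 (False # i) * e1 (False # i)) = 1" using d1(5) d2(5) by (simp add: prod.distrib)
    show "e2 (zs (Suc m)) * e1 (zs (Suc m)) = 1" using d1(6) d2(6) by simp
  qed
qed

lemma D_sq: "d \<in> D m \<Longrightarrow> d \<otimes>\<^bsub>BijGroup (Q (Suc m))\<^esub> d = \<one>\<^bsub>BijGroup (Q (Suc m))\<^esub>"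
proof -
  assume "d \<in> D m"
  then obtain e where d: "d = st (Suc m) (zs (Suc m)) e" "pme e" using D_elem by blast
  have "d \<otimes>\<^bsub>BijGroup (Q (Suc m))\<^esub> d = st (Suc m) (zs (Suc m)) (\<lambda>j. e j * e j)"
    unfolding d(1) by (rule diag_mult[OF d(2) d(2)])
  also have "\<dots> = st (Suc m) (zs (Suc m)) (\<lambda>_. 1)" using d(2) by simp
  finally show ?thesis by (simp add: st_id BG_one del: replicate_Suc)
qed

lemma D_comm: "d1 \<in> D m \<Longrightarrow> d2 \<in> D m \<Longrightarrow>
   d1 \<otimes>\<^bsub>BijGroup (Q (Suc m))\<^esub> d2 = d2 \<otimes>\<^bsub>BijGroup (Q (Suc m))\<^esub> d1"
proof -
  assume "d1 \<in> D m" "d2 \<in> D m"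
  then obtain e1 e2 where d: "d1 = st (Suc m) (zs (Suc m)) e1" "pme e1"
    "d2 = st (Suc m) (zs (Suc m)) e2" "pme e2" using D_elem by metis
  show ?thesis unfolding d(1,3) diag_mult[OF d(2) d(4)] diag_mult[OF d(4) d(2)]
    by (simp add: mult.commute)
qed

lemma D_carrier: "D m \<subseteq> carrier (BijGroup (Q (Suc m)))"
  unfolding D_def BG_carrier using st_Bij by auto

lemma D_subgroup: "subgroup (D m) (BijGroup (Q (Suc m)))"
proof (rule group.subgroupI[OF group_BijGroup D_carrier])
  show "D m \<noteq> {}" using D_one by blast
next
  fix d assume d: "d \<in> D m"
  have "inv\<^bsub>BijGroup (Q (Suc m))\<^esub> d = d"
    by (rule group.inv_equality[OF group_BijGroup D_sq[OF d]]) (use D_carrier d in auto)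
  then show "inv\<^bsub>BijGroup (Q (Suc m))\<^esub> d \<in> D m" using d by simp
next
  fix a b assume "a \<in> D m" "b \<in> D m" then show "a \<otimes>\<^bsub>BijGroup (Q (Suc m))\<^esub> b \<in> D m" by (rule D_mult)
qed

definition gf :: "bool \<Rightarrow> bool list set \<Rightarrow> bool list \<Rightarrow> int" where
  "gf b A j = (if tl j \<in> A then -1 else 1) * (if hd j \<and> b then -1 else 1)"

lemma pme_gf: "pme (gf b A)" unfolding pme_def gf_def by auto

definition Ev :: "nat \<Rightarrow> bool list set set" where
  "Ev m = {A. A \<subseteq> L m - {zs m} \<and> even (card A)}"

lemma prod_ind: "A \<subseteq> L m \<Longrightarrow> (\<Prod>i\<in>L m. (if i \<in> A then -1 else 1::int)) = (-1) ^ card A"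
  by (simp add: prod.If_cases Int_absorb1)

lemma D_image: "D m = (\<lambda>(b, A). st (Suc m) (zs (Suc m)) (gf b A)) ` (UNIV \<times> Ev m)"
proof
  show "(\<lambda>(b, A). st (Suc m) (zs (Suc m)) (gf b A)) ` (UNIV \<times> Ev m) \<subseteq> D m"
  proof clarify
    fix b A assume "A \<in> Ev m"
    then have A: "A \<subseteq> L m - {zs m}" "even (card A)" unfolding Ev_def by auto
    show "st (Suc m) (zs (Suc m)) (gf b A) \<in> D m" unfolding D_def
    proof (intro CollectI exI[of _ "gf b A"] conjI refl pme_gf)
      show "\<exists>c. pm c \<and> (\<forall>i. length i = m \<longrightarrow> gf b A (True # i) = c * gf b A (False # i))"
        by (intro exI[of _ "if b then -1 else 1"]) (auto simp: gf_def)
      have "(\<Prod>i\<in>L m. gf b A (False # i)) = (\<Prod>i\<in>L m. (if i \<in> A then -1 else 1::int))"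
        by (simp add: gf_def)
      also have "\<dots> = 1" using prod_ind[of A m] A by auto
      finally show "(\<Prod>i\<in>L m. gf b A (False # i)) = 1" .
      show "gf b A (zs (Suc m)) = 1" using A by (auto simp: gf_def)
    qed
  qed
next
  show "D m \<subseteq> (\<lambda>(b, A). st (Suc m) (zs (Suc m)) (gf b A)) ` (UNIV \<times> Ev m)"
  proof
    fix d assume "d \<in> D m"
    then obtain e c where d: "d = st (Suc m) (zs (Suc m)) e" "pme e" "pm c"
      "\<And>i. length i = m \<Longrightarrow> e (True#i) = c * e (False#i)"
      "(\<Prod>i\<in>L m. e (False#i)) = 1" "e (zs (Suc m)) = 1"
      unfolding D_def by blast
    define A where "A = {i \<in> L m. e (False#i) = -1}"
    have "even (card A)" using d(5) prod_sign[OF d(2), of m] unfolding A_def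
      by (metis neg_one_odd_power one_neq_neg_one)
    moreover have "A \<subseteq> L m - {zs m}" using d(6) unfolding A_def by auto
    ultimately have AE: "A \<in> Ev m" unfolding Ev_def by simp
    have "d = st (Suc m) (zs (Suc m)) (gf (c = -1) A)"
      unfolding d(1)
    proof (rule st_cong)
      fix j :: "bool list" assume "length j = Suc m"
      then obtain a i where ai: "j = a # i" "length i = m" by (cases j) auto
      have pf: "pm (e (False#i))" using pmeD[OF d(2)] .
      show "e j = gf (c = -1) A j"
      proof (cases a)
        case True
        then show ?thesis using ai d(3) d(4)[OF ai(2)] pf unfolding gf_def A_def L_def by auto
      next
        case False
        then show ?thesis using ai pf unfolding gf_def A_def L_def by auto
      qed
    qed
    then show "d \<in> (\<lambda>(b, A). st (Suc m) (zs (Suc m)) (gf b A)) ` (UNIV \<times> Ev m)"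
      using AE by force
  qed
qed

lemma inj_G: "inj_on (\<lambda>(b, A). st (Suc m) (zs (Suc m)) (gf b A)) (UNIV \<times> Ev m)"
proof (rule inj_onI, clarify)
  fix b A b' A' assume A: "A \<in> Ev m" and A': "A' \<in> Ev m"
    and eq: "st (Suc m) (zs (Suc m)) (gf b A) = st (Suc m) (zs (Suc m)) (gf b' A')"
  have g: "\<And>j. length j = Suc m \<Longrightarrow> gf b A j = gf b' A' j"
    using st_inj[OF eq _ _ pme_gf pme_gf] by simp
  have "i \<in> A \<longleftrightarrow> i \<in> A'" for i
  proof (cases "length i = m")
    case True
    then show ?thesis using g[of "False # i"] by (auto simp: gf_def split: if_splits)
  next
    case False
    then show ?thesis using A A' unfolding Ev_def L_def by auto
  qed
  then have AA: "A = A'" by blast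
  have "zs m \<notin> A" using A unfolding Ev_def by auto
  then have "b = b'" using g[of "True # zs m"] AA by (auto simp: gf_def split: if_splits)
  with AA show "b = b' \<and> A = A'" by simp
qed

lemma card_Ev: assumes "m \<ge> 1" shows "2 * card (Ev m) = 2 ^ (2 ^ m - 1)"
proof -
  let ?S = "L m - {zs m}"
  have fS: "finite ?S" by simp
  have cS: "card ?S = 2 ^ m - 1" using card_L[of m] by (simp add: L_def)
  have ne: "{} \<subset> ?S"
  proof -
    obtain k where k: "m = Suc k" using assms by (cases m) auto
    have "True # zs k \<in> ?S" using k by (auto simp: L_def)
    then show ?thesis by blast
  qed
  have eo: "card {T. T \<subseteq> ?S \<and> {} \<subseteq> T \<and> even (card T)} = card {T. T \<subseteq> ?S \<and> {} \<subseteq> T \<and> odd (card T)}"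
    by (rule card_subsupersets_even_odd[OF fS ne])
  have "Pow ?S = {T. T \<subseteq> ?S \<and> even (card T)} \<union> {T. T \<subseteq> ?S \<and> odd (card T)}" by auto
  moreover have f1: "finite {T. T \<subseteq> ?S \<and> even (card T)}"
    by (rule finite_subset[of _ "Pow ?S"]) (use fS in auto)
  moreover have f2: "finite {T. T \<subseteq> ?S \<and> odd (card T)}"
    by (rule finite_subset[of _ "Pow ?S"]) (use fS in auto)
  ultimately have "card (Pow ?S) = card {T. T \<subseteq> ?S \<and> even (card T)} + card {T. T \<subseteq> ?S \<and> odd (card T)}"
    using card_Un_disjoint[OF f1 f2] by auto
  then have "2 ^ card ?S = 2 * card {T. T \<subseteq> ?S \<and> even (card T)}" using eo fS by (simp add: card_Pow)
  then show ?thesis unfolding Ev_def cS by simp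
qed

lemma card_D: assumes "m \<ge> 1" shows "card (D m) = 2 ^ (2 ^ m - 1)"
proof -
  have "card (D m) = card ((UNIV::bool set) \<times> Ev m)"
    unfolding D_image by (rule card_image[OF inj_G[of m]])
  also have "\<dots> = 2 * card (Ev m)" by (simp add: card_cartesian_product)
  finally show ?thesis using card_Ev[OF assms] by simp
qed

lemma D_ab: "elementary_abelian_2_subgroup (D m) (BijGroup (Q (Suc m)))"
  unfolding elementary_abelian_2_subgroup_def
  using D_subgroup D_comm D_sq by blast

theorem mainTheorem16:
  fixes n :: nat
  assumes "n \<ge> 3"
  shows "Inn_l n = Inn_r n
    \<and> elementary_abelian_2_subgroup (Inn_l n) (BijGroup (Q n))
    \<and> card (Inn_l n) = 2 ^ (2 ^ (n - 1) - 1)"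
proof -
  define m where "m = n - 1"
  have n: "n = Suc m" and m: "m \<ge> 2" using assms unfolding m_def by auto
  have I: "Inn_l n = D m" using Inn_l_eq[OF m] n by simp
  have "Inn_l n = Inn_r n" using Inn_r_eq[OF m] n by simp
  moreover have "elementary_abelian_2_subgroup (Inn_l n) (BijGroup (Q n))"
    using D_ab[of m] I n by simp
  moreover have "card (Inn_l n) = 2 ^ (2 ^ (n - 1) - 1)" using I n card_D[of m] m by simp
  ultimately show ?thesis by blast
qed


end
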